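(* Let $\langle\theta\rangle:=B_+/B_1$, where $B_1=\langle\eta,\xi,\xi_L\rangle$. Then $HH^n_{(1-n)}(B,\langle\theta\rangle)\cong k$ for $n\in\{1,2\}$ and $0$ otherwise; $HH^n_{(2-n)}(B,\langle\theta\rangle)\cong k$ for $n\in\{5,6\}$ and $0$ otherwise; $HH^n_{(3-n)}(B,\langle\theta\rangle)\cong k$ for $n\in\{9,10\}$ and $0$ otherwise; $HH^n_{(4-n)}(B,\langle\theta\rangle)\cong k$ for $n\in\{13,14\}$ and $0$ otherwise.
   Context: Let $k$ be a field with $\operatorname{char}k\neq2,3$. Let $B$ be the graded $k$-algebra with $k$-basis $\mathrm{id}_L,\mathrm{id}_{\mathcal O},\theta$ (degree $0$) and $\eta,\xi,\xi_L$ (degree $1$), whose only nonzero products of basis elements are $\mathrm{id}_L\mathrm{id}_L=\mathrm{id}_L$, $\mathrm{id}_{\mathcal O}\mathrm{id}_{\mathcal O}=\mathrm{id}_{\mathcal O}$, $\mathrm{id}_L\xi_L=\xi_L\mathrm{id}_L=\xi_L$, $\mathrm{id}_{\mathcal O}\xi=\xi\mathrm{id}_{\mathcal O}=\xi$, $\mathrm{id}_L\eta=\eta\,\mathrm{id}_{\mathcal O}=\eta$, $\mathrm{id}_{\mathcal O}\theta=\theta\,\mathrm{id}_L=\theta$, $\theta\eta=\xi$, $\eta\theta=\xi_L$. Let $R=k\langle\mathrm{id}_L,\mathrm{id}_{\mathcal O}\rangle$, $B_+=\langle\theta,\eta,\xi,\xi_L\rangle$, $B=R\oplus B_+$; tensor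 products are over $R$. $B_1=\langle\eta,\xi,\xi_L\rangle$ is a sub-bimodule of $B_+$. For a graded $B$-bimodule $M$, the reduced Hochschild complex is $C^n(B,M)=\operatorname{Hom}_{R\text{-}R}(B_+^{\otimes_R n},M)$ with $\delta(\phi)(a_0,\dots,a_n)=a_0\phi(a_1,\dots,a_n)+\sum_{i=1}^n(-1)^i\phi(a_0,\dots,a_{i-1}a_i,\dots,a_n)+(-1)^{n+1}\phi(a_0,\dots,a_{n-1})a_n$; $HH^n_{(m)}(B,M)$ is the cohomology of the subcomplex of cochains homogeneous of internal degree $m$ ($\deg\phi(x)=\deg x+m$). *)

theory Defs
  imports Main
begin

datatype bas = IdL | IdO | Th | Eta | Xi | XiL

definition basis_set :: "bas set" where
  "basis_set = {IdL, IdO, Th, Eta, Xi, XiL}"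

definition degb :: "bas \<Rightarrow> int" where
  "degb c = (if c \<in> {IdL, IdO, Th} then 0 else 1)"

text \<open>Products of basis elements (None = zero).\<close>
fun bmul :: "bas \<Rightarrow> bas \<Rightarrow> bas option" where
  "bmul IdL IdL = Some IdL"
| "bmul IdO IdO = Some IdO"
| "bmul IdL XiL = Some XiL"
| "bmul XiL IdL = Some XiL"
| "bmul IdO Xi = Some Xi"
| "bmul Xi IdO = Some Xi"
| "bmul IdL Eta = Some Eta"
| "bmul Eta IdO = Some Eta"
| "bmul IdO Th = Some Th"
| "bmul Th IdL = Some Th"
| "bmul Th Eta = Some Xi"
| "bmul Eta Th = Some XiL"
| "bmul _ _ = None"

type_synonym 'k B = "bas \<Rightarrow> 'k"

definition bmult :: "'k::field B \<Rightarrow> 'k B \<Rightarrow> 'k B" where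
  "bmult x y = (\<lambda>c. \<Sum>a\<in>basis_set. \<Sum>b\<in>basis_set.
                     (if bmul a b = Some c then x a * y b else 0))"

definition Rset :: "'k::field B set" where
  "Rset = {x. \<forall>c. c \<notin> {IdL, IdO} \<longrightarrow> x c = 0}"

definition Bplus :: "'k::field B set" where
  "Bplus = {x. x IdL = 0 \<and> x IdO = 0}"

definition B1 :: "'k::field B set" where
  "B1 = {x. x IdL = 0 \<and> x IdO = 0 \<and> x Th = 0}"

definition homog :: "int \<Rightarrow> 'k::field B \<Rightarrow> bool" where
  "homog d x \<longleftrightarrow> (\<forall>c. x c \<noteq> 0 \<longrightarrow> degb c = d)"

text \<open>M = B_+/B_1 is one-dimensional, spanned by the class of theta; we represent
  an element of M by its coordinate in 'k.  The quotient map B_+ \<rightarrow> M is qproj,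
  whose kernel on B_+ is exactly B_1 (lemma below), and the B-bimodule structure
  is induced from multiplication in B (B_+ being an ideal).\<close>
definition qproj :: "'k::field B \<Rightarrow> 'k" where
  "qproj x = x Th"

definition qlift :: "'k::field \<Rightarrow> 'k B" where
  "qlift m = (\<lambda>c. if c = Th then m else 0)"

lemma B1_is_kernel: "B1 = {x \<in> Bplus. qproj x = 0}"
  by (auto simp: B1_def Bplus_def qproj_def)

definition lact :: "'k::field B \<Rightarrow> 'k \<Rightarrow> 'k" where
  "lact b m = qproj (bmult b (qlift m))"

definition ract :: "'k::field \<Rightarrow> 'k B \<Rightarrow> 'k" where
  "ract m b = qproj (bmult (qlift m) b)"

text \<open>Grading of M: the class of theta has degree 0.\<close>
definition Mdeg :: "int \<Rightarrow> 'k::field set" where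
  "Mdeg d = (if d = 0 then UNIV else {0})"

text \<open>An n-cochain Hom_{R-R}(B_+^{\<otimes>_R n}, M) is represented as a function on lists of
  length n of elements of B_+ which is k-multilinear, R-balanced and R-R-linear
  (universal property of the tensor product over R); it is 0 off B_+^n.
  For n = 0, B_+^{\<otimes> 0} = R and the condition is r m = m r.\<close>
definition cochains :: "nat \<Rightarrow> int \<Rightarrow> ('k::field B list \<Rightarrow> 'k) set" where
  "cochains n m = {\<phi>.
     (\<forall>as. \<not> (length as = n \<and> set as \<subseteq> Bplus) \<longrightarrow> \<phi> as = 0)
   \<and> (\<forall>as i x y. length as = n \<and> set as \<subseteq> Bplus \<and> i < n \<and> x \<in> Bplus \<and> y \<in> Bplus \<longrightarrow>
        \<phi> (as[i := (\<lambda>c. x c + y c)]) = \<phi> (as[i := x]) + \<phi> (as[i := y]))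
   \<and> (\<forall>as i x s. length as = n \<and> set as \<subseteq> Bplus \<and> i < n \<and> x \<in> Bplus \<longrightarrow>
        \<phi> (as[i := (\<lambda>c. s * x c)]) = s * \<phi> (as[i := x]))
   \<and> (\<forall>as i r. length as = n \<and> set as \<subseteq> Bplus \<and> Suc i < n \<and> r \<in> Rset \<longrightarrow>
        \<phi> (as[i := bmult (as ! i) r]) = \<phi> (as[Suc i := bmult r (as ! Suc i)]))
   \<and> (\<forall>as r. length as = n \<and> set as \<subseteq> Bplus \<and> 0 < n \<and> r \<in> Rset \<longrightarrow>
        \<phi> (as[0 := bmult r (as ! 0)]) = lact r (\<phi> as)
      \<and> \<phi> (as[n - 1 := bmult (as ! (n - 1)) r]) = ract (\<phi> as) r)
   \<and> (n = 0 \<longrightarrow> (\<forall>r \<in> Rset. lact r (\<phi> []) = ract (\<phi> []) r))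
   \<and> (\<forall>as ds. length as = n \<and> set as \<subseteq> Bplus \<and> list_all2 homog ds as \<longrightarrow>
        \<phi> as \<in> Mdeg (sum_list ds + m))}"

definition hdiff :: "nat \<Rightarrow> ('k::field B list \<Rightarrow> 'k) \<Rightarrow> ('k B list \<Rightarrow> 'k)" where
  "hdiff n \<phi> = (\<lambda>as. if length as = Suc n \<and> set as \<subseteq> Bplus then
       lact (as ! 0) (\<phi> (tl as))
     + (\<Sum>i\<in>{1..n}. (-1) ^ i *
          \<phi> (take (i - 1) as @ [bmult (as ! (i - 1)) (as ! i)] @ drop (Suc i) as))
     + (-1) ^ (Suc n) * ract (\<phi> (take n as)) (as ! n)
     else 0)"

definition cocycles :: "nat \<Rightarrow> int \<Rightarrow> ('k::field B list \<Rightarrow> 'k) set" where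
  "cocycles n m = {\<phi> \<in> cochains n m. hdiff n \<phi> = (\<lambda>_. 0)}"

definition coboundaries :: "nat \<Rightarrow> int \<Rightarrow> ('k::field B list \<Rightarrow> 'k) set" where
  "coboundaries n m = (if n = 0 then {(\<lambda>_. 0)} else hdiff (n - 1) ` cochains (n - 1) m)"

text \<open>HH^n_(m)(B, <theta>) \<cong> k : there is a k-linear surjection from the cocycles
  onto k whose kernel is exactly the coboundaries (i.e. Z/B \<cong> k).\<close>
definition HH_iso_k :: "'k::field itself \<Rightarrow> nat \<Rightarrow> int \<Rightarrow> bool" where
  "HH_iso_k _ n m \<longleftrightarrow> (\<exists>f :: ('k B list \<Rightarrow> 'k) \<Rightarrow> 'k.
       (\<forall>x \<in> cocycles n m. \<forall>y \<in> cocycles n m. f (\<lambda>as. x as + y as) = f x + f y)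
     \<and> (\<forall>s. \<forall>x \<in> cocycles n m. f (\<lambda>as. s * x as) = s * f x)
     \<and> f ` cocycles n m = UNIV
     \<and> {x \<in> cocycles n m. f x = 0} = coboundaries n m)"

definition HH_zero :: "'k::field itself \<Rightarrow> nat \<Rightarrow> int \<Rightarrow> bool" where
  "HH_zero _ n m \<longleftrightarrow> (cocycles n m :: ('k B list \<Rightarrow> 'k) set) = coboundaries n m"

end

theory Submission
  imports Defs
begin


definition Bp :: "bas set" where "Bp = {Th, Eta, Xi, XiL}"

definition ee :: "bas \<Rightarrow> 'k::field B" where "ee c = (\<lambda>x. if x = c then 1 else 0)"

fun ev :: "(bas list \<Rightarrow> 'k::field) \<Rightarrow> 'k B list \<Rightarrow> 'k" where
  "ev G [] = G []"
| "ev G (a # as) = (\<Sum>c\<in>Bp. a c * ev (\<lambda>cs. G (c # cs)) as)"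

lemma ee_apply: "ee c x = (if x = c then 1 else 0)" by (simp add: ee_def)

lemma finite_Bp[simp]: "finite Bp" by (simp add: Bp_def)

lemma ev_add: "ev (\<lambda>cs. G cs + H cs) as = ev G as + ev H as"
  by (induction as arbitrary: G H) (simp_all add: distrib_left sum.distrib)

lemma ev_scale: "ev (\<lambda>cs. s * G cs) as = s * ev G as"
  by (induction as arbitrary: G) (simp_all add: sum_distrib_left algebra_simps)

lemma ev_sum: "finite I \<Longrightarrow> ev (\<lambda>cs. \<Sum>i\<in>I. F i cs) as = (\<Sum>i\<in>I. ev (F i) as)"
proof (induction as arbitrary: F)
  case Nil then show ?case by simp
next
  case (Cons a as)
  have "ev (\<lambda>cs. \<Sum>i\<in>I. F i cs) (a # as) = (\<Sum>c\<in>Bp. a c * (\<Sum>i\<in>I. ev (\<lambda>cs. F i (c # cs)) as))"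
    using Cons by simp
  also have "\<dots> = (\<Sum>i\<in>I. \<Sum>c\<in>Bp. a c * ev (\<lambda>cs. F i (c # cs)) as)"
    by (simp add: sum_distrib_left sum.swap[of _ I])
  finally show ?case by simp
qed

lemma ev_cong: "(\<And>cs. length cs = length as \<Longrightarrow> set cs \<subseteq> Bp \<Longrightarrow> G cs = H cs) \<Longrightarrow> ev G as = ev H as"
proof (induction as arbitrary: G H)
  case Nil then show ?case by simp
next
  case (Cons a as)
  show ?case unfolding ev.simps
    apply (rule sum.cong[OF refl])
    apply (subst Cons.IH[where H="\<lambda>cs. H (_ # cs)"])
     apply (rule Cons.prems) apply auto
    done
qed

lemma ev_zero_fun: "ev (\<lambda>_. 0) as = 0"
  using ev_scale[of 0 "\<lambda>_. 0" as] by simp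

lemma ev_zero: "(\<And>cs. length cs = length as \<Longrightarrow> set cs \<subseteq> Bp \<Longrightarrow> (\<forall>i<length as. (as!i) (cs!i) \<noteq> 0) \<Longrightarrow> G cs = 0) \<Longrightarrow> ev G as = 0"
proof (induction as arbitrary: G)
  case Nil then show ?case by simp
next
  case (Cons a as)
  have "a c * ev (\<lambda>cs. G (c # cs)) as = 0" if c: "c \<in> Bp" for c
  proof (cases "a c = 0")
    case True then show ?thesis by simp
  next
    case False
    have "ev (\<lambda>cs. G (c # cs)) as = 0"
    proof (rule Cons.IH)
      fix cs assume "length cs = length as" "set cs \<subseteq> Bp" "\<forall>i<length as. (as ! i) (cs ! i) \<noteq> 0"
      then show "G (c # cs) = 0"
        using False c by (intro Cons.prems) (auto simp: nth_Cons split: nat.splits)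
    qed
    then show ?thesis by simp
  qed
  then show ?case by (simp add: sum.neutral)
qed

lemma ev_basis: "set cs \<subseteq> Bp \<Longrightarrow> ev G (map ee cs) = G cs"
proof (induction cs arbitrary: G)
  case Nil then show ?case by simp
next
  case (Cons c cs)
  have IH: "ev (\<lambda>v. G (x # v)) (map ee cs) = G (x # cs)" for x
    using Cons.prems by (intro Cons.IH) simp
  have "ev G (map ee (c # cs)) = (\<Sum>x\<in>Bp. ee c x * ev (\<lambda>v. G (x # v)) (map ee cs))"
    by simp
  also have "\<dots> = (\<Sum>x\<in>Bp. (if x = c then 1 else 0) * G (x # cs))"
    by (simp only: IH ee_apply)
  also have "\<dots> = (\<Sum>x\<in>Bp. if x = c then G (x # cs) else 0)" by (rule sum.cong) auto
  also have "\<dots> = G (c # cs)" using Cons.prems by (simp add: sum.delta)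
  finally show ?case .
qed

lemma ev_upd_add: "i < length as \<Longrightarrow> ev G (as[i := (\<lambda>c. x c + y c)]) = ev G (as[i := x]) + ev G (as[i := y])"
proof (induction as arbitrary: i G)
  case Nil then show ?case by simp
next
  case (Cons a as)
  show ?case
  proof (cases i)
    case 0 then show ?thesis by (simp add: distrib_right sum.distrib)
  next
    case (Suc j) then show ?thesis using Cons by (simp add: distrib_left sum.distrib)
  qed
qed

lemma ev_upd_weight: "i < length as \<Longrightarrow> ev G (as[i := (\<lambda>c. f c * (as!i) c)]) = ev (\<lambda>cs. f (cs!i) * G cs) as"
proof (induction as arbitrary: i G)
  case Nil then show ?case by simp
next
  case (Cons a as)
  show ?case
  proof (cases i)
    case 0 then show ?thesis by (simp add: ev_scale algebra_simps)
  next
    case (Suc j) then show ?thesis using Cons by simp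
  qed
qed

lemma ev_snoc: "ev G (xs @ [y]) = ev (\<lambda>cs. \<Sum>c\<in>Bp. y c * G (cs @ [c])) xs"
  by (induction xs arbitrary: G) simp_all



fun lft :: "bas \<Rightarrow> bas" where
  "lft IdL = IdL" | "lft IdO = IdO" | "lft Th = IdO" | "lft Eta = IdL" | "lft Xi = IdO" | "lft XiL = IdL"
fun rgt :: "bas \<Rightarrow> bas" where
  "rgt IdL = IdL" | "rgt IdO = IdO" | "rgt Th = IdL" | "rgt Eta = IdO" | "rgt Xi = IdO" | "rgt XiL = IdL"

lemma basis_set_all: "c \<in> basis_set" by (cases c) (auto simp: basis_set_def)
lemma finite_basis_set[simp]: "finite basis_set" by (simp add: basis_set_def)

lemma bmult_ee: "bmult (ee a) (ee b) = (case bmul a b of Some c \<Rightarrow> ee c | None \<Rightarrow> (\<lambda>_. 0))"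
proof
  fix x
  have "bmult (ee a) (ee b) x = (\<Sum>a'\<in>basis_set. if a' = a then (\<Sum>b'\<in>basis_set.
        (if b' = b then (if bmul a' b' = Some x then 1 else 0) else 0)) else 0)"
    unfolding bmult_def
  proof (rule sum.cong[OF refl])
    fix a' assume "a' \<in> basis_set"
    show "(\<Sum>b'\<in>basis_set. if bmul a' b' = Some x then ee a a' * ee b b' else 0) = (if a' = a then (\<Sum>b'\<in>basis_set.
        (if b' = b then (if bmul a' b' = Some x then 1 else 0) else 0)) else 0)"
    proof (cases "a' = a")
      case True
      have "(\<Sum>b'\<in>basis_set. if bmul a' b' = Some x then ee a a' * ee b b' else 0) =
        (\<Sum>b'\<in>basis_set. (if b' = b then (if bmul a' b' = Some x then 1 else 0) else 0))"
        using True by (intro sum.cong refl) (simp add: ee_apply)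
      then show ?thesis by (subst if_P[OF True])
    next
      case False
      then show ?thesis by (simp add: ee_apply[of a a'] sum.neutral)
    qed
  qed
  also have "\<dots> = (if bmul a b = Some x then 1 else 0)"
    using basis_set_all[of a] basis_set_all[of b] by (simp add: sum.delta)
  finally show "bmult (ee a) (ee b) x = (case bmul a b of Some c \<Rightarrow> ee c | None \<Rightarrow> (\<lambda>_. 0)) x"
    by (auto simp: ee_apply split: option.splits)
qed

lemma lact_formula: "lact b x = b IdO * x"
  by (simp add: lact_def qproj_def bmult_def qlift_def basis_set_def)

lemma ract_formula: "ract x b = x * b IdL"
  by (simp add: ract_def qproj_def bmult_def qlift_def basis_set_def)

lemma Bplus_iff: "x \<in> Bplus \<longleftrightarrow> x IdL = 0 \<and> x IdO = 0" by (simp add: Bplus_def)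
lemma Rset_iff: "r \<in> Rset \<longleftrightarrow> r Th = 0 \<and> r Eta = 0 \<and> r Xi = 0 \<and> r XiL = 0"
  unfolding Rset_def apply auto subgoal for c by (cases c) auto done

lemma bmult_right_R: "x \<in> Bplus \<Longrightarrow> r \<in> Rset \<Longrightarrow> bmult x r = (\<lambda>c. r (rgt c) * x c)"
  apply (rule ext) subgoal for c by (cases c) (auto simp: Bplus_iff Rset_iff bmult_def basis_set_def)
  done

lemma bmult_left_R: "x \<in> Bplus \<Longrightarrow> r \<in> Rset \<Longrightarrow> bmult r x = (\<lambda>c. r (lft c) * x c)"
  apply (rule ext) subgoal for c by (cases c) (auto simp: Bplus_iff Rset_iff bmult_def basis_set_def)
  done

lemma bmult_Bplus: "x \<in> Bplus \<Longrightarrow> bmult x y \<in> Bplus"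
  by (simp add: Bplus_iff bmult_def basis_set_def)

lemma ee_Bplus: "c \<in> Bp \<Longrightarrow> ee c \<in> Bplus"
  by (auto simp: Bp_def Bplus_iff ee_apply)

lemma merge_core:
  assumes "a \<in> Bplus" "b \<in> Bplus"
  shows "(\<Sum>c\<in>Bp. bmult a b c * E c) =
         (\<Sum>x\<in>Bp. a x * (\<Sum>y\<in>Bp. b y * (case bmul x y of Some c \<Rightarrow> E c | None \<Rightarrow> 0)))"
  using assms by (simp add: Bp_def Bplus_iff bmult_def basis_set_def algebra_simps)

definition Dl :: "nat \<Rightarrow> (bas list \<Rightarrow> 'k::field) \<Rightarrow> bas list \<Rightarrow> 'k" where
  "Dl i G cs = (case bmul (cs!i) (cs!Suc i) of Some c \<Rightarrow> G (take i cs @ [c] @ drop (Suc (Suc i)) cs) | None \<Rightarrow> 0)"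

lemma ev_merge:
  "Suc i < length as \<Longrightarrow> as!i \<in> Bplus \<Longrightarrow> as!Suc i \<in> Bplus \<Longrightarrow>
   ev G (take i as @ [bmult (as!i) (as!Suc i)] @ drop (Suc (Suc i)) as) = ev (Dl i G) as"
proof (induction as arbitrary: i G)
  case Nil then show ?case by simp
next
  case (Cons a as)
  show ?case
  proof (cases i)
    case 0
    then obtain b rest where as: "as = b # rest" using Cons.prems by (cases as) auto
    have ab: "a \<in> Bplus" "b \<in> Bplus" using Cons.prems 0 as by auto
    have "ev G (take i (a # as) @ [bmult ((a # as)!i) ((a # as)!Suc i)] @ drop (Suc (Suc i)) (a # as))
        = (\<Sum>c\<in>Bp. bmult a b c * ev (\<lambda>cs. G (c # cs)) rest)" using 0 as by simp
    also have "\<dots> = (\<Sum>x\<in>Bp. a x * (\<Sum>y\<in>Bp. b y * (case bmul x y of Some c \<Rightarrow> ev (\<lambda>cs. G (c # cs)) rest | None \<Rightarrow> 0)))"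
      by (rule merge_core[OF ab])
    also have "\<dots> = ev (Dl i G) (a # as)"
      using 0 as by (auto intro!: sum.cong simp: Dl_def ev_zero_fun split: option.splits)
    finally show ?thesis .
  next
    case (Suc j)
    have "ev (\<lambda>cs. G (c # cs)) (take j as @ [bmult (as!j) (as!Suc j)] @ drop (Suc (Suc j)) as)
          = ev (Dl j (\<lambda>cs. G (c # cs))) as" for c
      using Cons.prems Suc by (intro Cons.IH) auto
    moreover have "Dl j (\<lambda>cs. G (c # cs)) = (\<lambda>cs. Dl (Suc j) G (c # cs))" for c
      by (rule ext) (simp add: Dl_def split: option.splits)
    ultimately show ?thesis using Suc by simp
  qed
qed



fun chain :: "bas \<Rightarrow> bas list \<Rightarrow> bas \<Rightarrow> bool" where
  "chain s [] t = (s = t)"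
| "chain s (c # cs) t = (lft c = s \<and> chain (rgt c) cs t)"

definition letr :: "bas \<Rightarrow> nat \<Rightarrow> bas" where
  "letr s x = (if s = IdO then (if x = 1 then Th else Xi) else (if x = 1 then Eta else XiL))"

fun tupS :: "bas \<Rightarrow> nat list \<Rightarrow> bas list" where
  "tupS s [] = []"
| "tupS s (x # w) = letr s x # tupS (rgt (letr s x)) w"

definition wl :: "bas \<Rightarrow> nat" where "wl c = (if c = Th \<or> c = Eta then 1 else 2)"

definition pp :: "bas \<Rightarrow> int" where "pp s = (if s = IdL then 1 else 0)"

definition W :: "nat \<Rightarrow> int \<Rightarrow> nat list set" where
  "W n l = {u. length u = n \<and> set u \<subseteq> {1, 2} \<and> int (sum_list u) = l}"

lemma chain_tup: "set cs \<subseteq> Bp \<Longrightarrow> chain s cs t \<Longrightarrow> tupS s (map wl cs) = cs"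
proof (induction cs arbitrary: s)
  case Nil then show ?case by simp
next
  case (Cons c cs)
  have "letr s (wl c) = c" using Cons.prems by (cases c) (auto simp: Bp_def letr_def wl_def)
  then show ?case using Cons by simp
qed

lemma tup_len[simp]: "length (tupS s w) = length w"
  by (induction w arbitrary: s) auto

lemma letr_Bp: "letr s x \<in> Bp" by (simp add: letr_def Bp_def)
lemma rgt_letr: "rgt (letr s x) \<in> {IdO, IdL}" by (simp add: letr_def)

lemma tup_props:
  "s \<in> {IdO, IdL} \<Longrightarrow> set w \<subseteq> {1, 2} \<Longrightarrow>
   set (tupS s w) \<subseteq> Bp \<and> map wl (tupS s w) = w \<and> (\<exists>t\<in>{IdO, IdL}. chain s (tupS s w) t)"
proof (induction w arbitrary: s)
  case Nil then show ?case by auto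
next
  case (Cons x w)
  have IH: "set (tupS (rgt (letr s x)) w) \<subseteq> Bp \<and> map wl (tupS (rgt (letr s x)) w) = w \<and>
     (\<exists>t\<in>{IdO, IdL}. chain (rgt (letr s x)) (tupS (rgt (letr s x)) w) t)"
    using Cons rgt_letr by auto
  have "wl (letr s x) = x" "lft (letr s x) = s" using Cons.prems by (auto simp: wl_def letr_def)
  then show ?case using IH letr_Bp by auto
qed

lemma chain_pot: "chain s cs t \<Longrightarrow> set cs \<subseteq> Bp \<Longrightarrow>
   int (sum_list (map wl cs)) = 2 * sum_list (map degb cs) + pp t - pp s"
proof (induction cs arbitrary: s)
  case Nil then show ?case by simp
next
  case (Cons c cs)
  then have "int (sum_list (map wl cs)) = 2 * sum_list (map degb cs) + pp t - pp (rgt c)" by auto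
  moreover have "int (wl c) = 2 * degb c + pp (rgt c) - pp (lft c)"
    using Cons.prems by (cases c) (auto simp: Bp_def wl_def degb_def pp_def)
  ultimately show ?case using Cons.prems by simp
qed

lemma chain_nth: "chain s cs t \<longleftrightarrow> (if cs = [] then s = t else lft (cs!0) = s \<and>
   (\<forall>i. Suc i < length cs \<longrightarrow> rgt (cs!i) = lft (cs!Suc i)) \<and> rgt (cs!(length cs - 1)) = t)"
proof (induction cs arbitrary: s)
  case Nil then show ?case by simp
next
  case (Cons c cs)
  show ?case
  proof (cases cs)
    case Nil then show ?thesis by auto
  next
    case (Cons d ds)
    have "chain s (c # cs) t \<longleftrightarrow> lft c = s \<and> chain (rgt c) cs t" by simp
    also have "\<dots> \<longleftrightarrow> lft c = s \<and> lft (cs!0) = rgt c \<and>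
      (\<forall>i. Suc i < length cs \<longrightarrow> rgt (cs!i) = lft (cs!Suc i)) \<and> rgt (cs!(length cs - 1)) = t"
      using Cons.IH Cons by auto
    also have "\<dots> \<longleftrightarrow> lft ((c#cs)!0) = s \<and>
      (\<forall>i. Suc i < length (c#cs) \<longrightarrow> rgt ((c#cs)!i) = lft ((c#cs)!Suc i)) \<and> rgt ((c#cs)!(length (c#cs) - 1)) = t"
      using Cons by (auto simp: nth_Cons split: nat.splits)
    finally show ?thesis by simp
  qed
qed

lemma bmul_chain: "bmul c d = Some x \<Longrightarrow> lft x = lft c \<and> rgt c = lft d \<and> rgt x = rgt d"
  by (cases c; cases d) auto

lemma chain_merge: "bmul c d = Some x \<Longrightarrow> chain s (x # cs) t \<Longrightarrow> chain s (c # d # cs) t"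
  using bmul_chain[of c d x] by auto

lemma tup_merge:
  assumes "s \<in> {IdO, IdL}" "a \<in> {1, 2}" "b \<in> {1, 2}"
  shows "bmul (letr s a) (letr (rgt (letr s a)) b) = (if a = 1 \<and> b = 1 then Some (letr s 2) else None)
     \<and> (a = 1 \<and> b = 1 \<longrightarrow> rgt (letr s 2) = rgt (letr (rgt (letr s a)) b))"
  using assms by (auto simp: letr_def)

lemma W_good:
  assumes "u \<in> W n (1 - 2 * m)"
  shows "chain IdO (tupS IdO u) IdL \<and> sum_list (map degb (tupS IdO u)) = - m
     \<and> set (tupS IdO u) \<subseteq> Bp \<and> map wl (tupS IdO u) = u \<and> length (tupS IdO u) = n"
proof -
  have u: "set u \<subseteq> {1, 2}" "int (sum_list u) = 1 - 2 * m" "length u = n" using assms by (auto simp: W_def)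
  obtain t where t: "t \<in> {IdO, IdL}" "chain IdO (tupS IdO u) t" and bp: "set (tupS IdO u) \<subseteq> Bp"
    and wl: "map wl (tupS IdO u) = u"
    using tup_props[of IdO u] u by auto
  have "int (sum_list u) = 2 * sum_list (map degb (tupS IdO u)) + pp t - pp IdO"
    using chain_pot[OF t(2) bp] wl by simp
  then have "1 - 2 * m = 2 * sum_list (map degb (tupS IdO u)) + pp t" using u by (simp add: pp_def)
  moreover have "pp t = 0 \<or> pp t = 1" by (simp add: pp_def)
  ultimately have ppt: "pp t = 1" by presburger
  with \<open>1 - 2 * m = _\<close> have sd: "sum_list (map degb (tupS IdO u)) = - m" by simp
  have "t = IdL" using t ppt by (auto simp: pp_def)
  then show ?thesis using t bp wl u sd by auto
qed

lemma good_W: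
  assumes "set cs \<subseteq> Bp" "chain IdO cs IdL" "sum_list (map degb cs) = - m"
  shows "map wl cs \<in> W (length cs) (1 - 2 * m)"
proof -
  have "int (sum_list (map wl cs)) = 2 * (- m) + 1"
    using chain_pot[OF assms(2,1)] assms(3) by (simp add: pp_def)
  moreover have "set (map wl cs) \<subseteq> {1, 2}" by (auto simp: wl_def)
  ultimately show ?thesis by (simp add: W_def)
qed



fun wd :: "(nat list \<Rightarrow> 'k::field) \<Rightarrow> nat list \<Rightarrow> 'k" where
  "wd g [] = 0"
| "wd g [a] = 0"
| "wd g (a # b # v) = (if a = 1 \<and> b = 1 then - g (2 # v) else 0) - wd (\<lambda>u. g (a # u)) (b # v)"

lemma wd_cons: "wd h (a # v) = (case v of [] \<Rightarrow> 0 | b # v' \<Rightarrow> if a = 1 \<and> b = 1 then - h (2 # v') else 0)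
   - wd (\<lambda>u. h (a # u)) v"
  by (cases v) auto

lemma wd_11: "wd h (1 # 1 # v) = - h (2 # v) - wd (\<lambda>u. h (1 # u)) (1 # v)" by simp
lemma wd_12: "wd h (1 # 2 # v) = wd (\<lambda>u. h (1 # 2 # u)) v"
  by (simp add: wd_cons[of _ 2 v] split: list.splits)
lemma wd_2: "wd h (2 # v) = - wd (\<lambda>u. h (2 # u)) v"
  by (simp add: wd_cons[of _ 2 v] split: list.splits)
lemma wd_1: "wd h (1 # v) = (case v of [] \<Rightarrow> 0 | b # v' \<Rightarrow> if b = 1 then - h (2 # v') else 0)
   - wd (\<lambda>u. h (1 # u)) v"
  by (simp add: wd_cons[of _ 1 v] split: list.splits)

lemma wd_add: "wd (\<lambda>u. f u + h u) w = wd f w + wd h w"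
proof (induction w arbitrary: f h)
  case (Cons a w) then show ?case by (cases w) auto
qed simp

lemma wd_scale: "wd (\<lambda>u. s * f u) w = s * wd f w"
proof (induction w arbitrary: f)
  case (Cons a w) then show ?case by (cases w) (auto simp: algebra_simps)
qed simp

lemma wd_diff: "wd (\<lambda>u. f u - h u) w = wd f w - wd h w"
proof (induction w arbitrary: f h)
  case (Cons a w) then show ?case by (cases w) auto
qed simp

lemma wd_neg: "wd (\<lambda>u. - f u) w = - wd f w"
proof (induction w arbitrary: f)
  case (Cons a w) then show ?case by (cases w) auto
qed simp

lemma wd_zero: "wd (\<lambda>_. 0) w = 0"
  using wd_scale[of 0 "\<lambda>_. 0" w] by simp

lemma wd_cong: "set u \<subseteq> {1, 2} \<Longrightarrow> (\<And>v. set v \<subseteq> {1, 2} \<Longrightarrow> length v + 1 = length u \<Longrightarrow> sum_list v = sum_list u \<Longrightarrow> h v = h' v)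
   \<Longrightarrow> wd h u = wd h' u"
proof (induction u arbitrary: h h')
  case Nil then show ?case by simp
next
  case (Cons a v)
  have 1: "wd (\<lambda>u. h (a # u)) v = wd (\<lambda>u. h' (a # u)) v"
    by (rule Cons.IH) (use Cons.prems in auto)
  have 2: "(case v of [] \<Rightarrow> 0 | b # v' \<Rightarrow> if a = 1 \<and> b = 1 then - h (2 # v') else 0) =
           (case v of [] \<Rightarrow> 0 | b # v' \<Rightarrow> if a = 1 \<and> b = 1 then - h' (2 # v') else 0)"
    using Cons.prems by (auto split: list.splits)
  show ?case by (simp only: wd_cons[of _ a v] 1 2)
qed

lemma wd_wd: "wd (wd g) w = 0"
proof (induction g w rule: wd.induct)
  case (1 g) then show ?case by simp
next
  case (2 g a) then show ?case by simp
next
  case (3 g a b v)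
  define K where "K u = (case u of [] \<Rightarrow> 0 | b' # v' \<Rightarrow> if a = 1 \<and> b' = 1 then - g (2 # v') else 0)" for u
  have e1: "(\<lambda>u. wd g (a # u)) = (\<lambda>u. K u - wd (\<lambda>u'. g (a # u')) u)"
    by (rule ext) (simp add: wd_cons[of _ a] K_def)
  have e2: "wd (\<lambda>u. wd g (a # u)) (b # v) = wd K (b # v)"
    unfolding e1 wd_diff using 3 by simp
  have e3: "wd K (b # v) = (case v of [] \<Rightarrow> 0 | c # v' \<Rightarrow> if b = 1 \<and> c = 1 then - K (2 # v') else 0)
     - wd (\<lambda>u. K (b # u)) v" by (rule wd_cons)
  have e5: "wd g (2 # v) = - wd (\<lambda>u. g (2 # u)) v" by (rule wd_2)
  show ?case
  proof (cases v)
    case Nil then show ?thesis by simp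
  next
    case (Cons c v')
    have k2: "K (2 # v') = 0" for v' by (simp add: K_def)
    have e3': "wd K (b # v) = (if b = 1 \<and> c = 1 then 0 else 0) - wd (\<lambda>u. K (b # u)) v"
      using e3 Cons k2 by simp
    show ?thesis
    proof (cases "a = 1 \<and> b = 1")
      case True
      have e4: "(\<lambda>u. K (b # u)) = (\<lambda>u. - g (2 # u))"
        using True by (intro ext) (simp add: K_def)
      have "wd (wd g) (a # b # v) = - wd g (2 # v) - wd K (b # v)" using True e2 by simp
      also have "\<dots> = 0" using e3' e5 by (simp add: e4 wd_neg)
      finally show ?thesis .
    next
      case False
      have e4: "(\<lambda>u. K (b # u)) = (\<lambda>u. 0)"
        using False by (intro ext) (auto simp: K_def)
      have "wd (wd g) (a # b # v) = - wd K (b # v)" using False e2 by auto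
      also have "\<dots> = 0" using e3' by (simp add: e4 wd_zero)
      finally show ?thesis .
    qed
  qed
qed

definition crit :: "nat \<Rightarrow> int \<Rightarrow> bool" where
  "crit n l \<longleftrightarrow> (even n \<and> 2 * l = 3 * int n) \<or> (odd n \<and> 2 * l = 3 * int n - 1)"

fun cw :: "nat \<Rightarrow> nat list" where
  "cw 0 = []" | "cw (Suc 0) = [1]" | "cw (Suc (Suc n)) = 1 # 2 # cw n"

lemma cw_props: "length (cw n) = n \<and> set (cw n) \<subseteq> {1, 2} \<and>
   2 * int (sum_list (cw n)) = 3 * int n - (if odd n then 1 else 0)"
  by (induction n rule: cw.induct) auto

lemma cw_W: "crit n l \<Longrightarrow> cw n \<in> W n l"
  using cw_props[of n] by (auto simp: crit_def W_def)

lemma crit_step: "crit (Suc (Suc n)) l \<longleftrightarrow> crit n (l - 3)"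
  by (auto simp: crit_def)

lemma W3: "wd \<psi> (cw n) = 0"
proof (induction n arbitrary: \<psi> rule: cw.induct)
  case (3 n) then show ?case by (simp only: cw.simps wd_12)
qed simp_all

lemma W_Cons: "a # v \<in> W (Suc n) l \<longleftrightarrow> a \<in> {1, 2} \<and> v \<in> W n (l - int a)"
  by (auto simp: W_def)



lemma W_set: "u \<in> W n l \<Longrightarrow> set u \<subseteq> {1,2}" by (simp add: W_def)

lemma W1:
  "(\<forall>w\<in>W (Suc n) l. wd g w = 0) \<Longrightarrow> (crit n l \<Longrightarrow> g (cw n) = 0) \<Longrightarrow>
   \<exists>\<psi>. \<forall>w\<in>W n l. wd \<psi> w = g w"
proof (induction n arbitrary: l g rule: less_induct)
  case (less n)
  note coc = less.prems(1) and cr = less.prems(2)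
  obtain \<eta> where eta: "\<And>v. v \<in> W (n - 2) (l - 3) \<Longrightarrow> 2 \<le> n \<Longrightarrow> wd \<eta> v = g (1 # 2 # v)"
  proof (cases "2 \<le> n")
    case True
    then obtain n' where n': "n = Suc (Suc n')" by (metis add_2_eq_Suc le_Suc_ex)
    have "\<forall>v\<in>W (Suc n') (l - 3). wd (\<lambda>v. g (1 # 2 # v)) v = 0"
    proof
      fix v assume v: "v \<in> W (Suc n') (l - 3)"
      then have "1 # 2 # v \<in> W (Suc n) l" using n' by (auto simp: W_def)
      then have "wd g (1 # 2 # v) = 0" using coc by blast
      then show "wd (\<lambda>v. g (1 # 2 # v)) v = 0" by (simp only: wd_12)
    qed
    moreover have "crit n' (l - 3) \<Longrightarrow> g (1 # 2 # cw n') = 0"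
      using cr n' crit_step by force
    ultimately obtain \<eta> where "\<forall>w\<in>W n' (l - 3). wd \<eta> w = g (1 # 2 # w)"
      using less.IH[of n' "l - 3" "\<lambda>v. g (1 # 2 # v)"] n' by auto
    then show ?thesis using n' by (intro that) auto
  next
    case False then show ?thesis by (intro that[of "\<lambda>_. 0"]) auto
  qed
  define \<psi> where "\<psi> x = (if x \<noteq> [] \<and> hd x = 2 then - g (1 # 1 # tl x) + (if tl x \<noteq> [] \<and> hd (tl x) = 1 then \<eta> (tl (tl x)) else 0)
      else if x \<noteq> [] \<and> hd x = 1 \<and> tl x \<noteq> [] \<and> hd (tl x) = 2 then \<eta> (tl (tl x)) else 0)" for x
  have p2: "\<psi> (2 # v) = - g (1 # 1 # v) + (if v \<noteq> [] \<and> hd v = 1 then \<eta> (tl v) else 0)" for v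
    by (simp add: \<psi>_def)
  have p12: "\<psi> (1 # 2 # v) = \<eta> v" for v by (simp add: \<psi>_def)
  have p12s: "\<psi> (Suc 0 # 2 # v) = \<eta> v" for v by (simp add: \<psi>_def)
  have p11: "\<psi> (1 # 1 # v) = 0" for v by (simp add: \<psi>_def)
  have p1: "\<psi> [1] = 0" by (simp add: \<psi>_def)
  have "wd \<psi> x = g x" if x: "x \<in> W n l" for x
  proof (cases x)
    case Nil
    then have "n = 0" "l = 0" using x by (auto simp: W_def)
    then have "crit n l" by (simp add: crit_def)
    then show ?thesis using cr Nil \<open>n = 0\<close> by simp
  next
    case (Cons a v)
    have a: "a = 1 \<or> a = 2" using x Cons by (auto simp: W_def)
    show ?thesis
    proof (cases v)
      case Nil
      show ?thesis
      proof (cases "a = 1")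
        case True
        then have "n = 1" "l = 1" using x Cons Nil by (auto simp: W_def)
        then have "crit n l" by (simp add: crit_def)
        then show ?thesis using cr Cons Nil True \<open>n = 1\<close> by simp
      next
        case False
        then have a2: "a = 2" using a by simp
        then have "n = 1" "l = 2" using x Cons Nil by (auto simp: W_def)
        then have "[1, 1] \<in> W (Suc n) l" by (simp add: W_def)
        then have "wd g [1, 1] = 0" using coc by blast
        then show ?thesis using Cons Nil a2 by simp
      qed
    next
      case (Cons b v')
      note x' = \<open>x = a # v\<close>
      have b: "b = 1 \<or> b = 2" using x x' Cons by (auto simp: W_def)
      show ?thesis
      proof (cases "a = 1")
        case a1: True
        show ?thesis
        proof (cases "b = 1")
          case b1: True
          have "wd \<psi> (1 # 1 # v') = - \<psi> (2 # v') - wd (\<lambda>u. \<psi> (1 # u)) (1 # v')" by (rule wd_11)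
          moreover have "wd (\<lambda>u. \<psi> (1 # u)) (1 # v') = (case v' of [] \<Rightarrow> 0 | b # v'' \<Rightarrow> if b = 1 then - \<eta> v'' else 0)"
          proof -
            have "wd (\<lambda>u. \<psi> (1 # u)) (1 # v') = (case v' of [] \<Rightarrow> 0 | b # v'' \<Rightarrow> if b = 1 then - \<psi> (1 # 2 # v'') else 0)
               - wd (\<lambda>u. \<psi> (1 # 1 # u)) v'" by (rule wd_1)
            also have "(\<lambda>u. \<psi> (1 # 1 # u)) = (\<lambda>u. 0)" by (rule ext) (rule p11)
            finally show ?thesis by (simp add: wd_zero p12 p12s split: list.splits)
          qed
          ultimately show ?thesis using x' Cons a1 b1 by (simp add: p2 split: list.splits)
        next
          case b2: False
          then have b2: "b = 2" using b by simp
          have "v' \<in> W (n - 2) (l - 3)" "2 \<le> n" using x x' Cons a1 b2 by (auto simp: W_def)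
          then have "wd \<eta> v' = g (1 # 2 # v')" by (rule eta)
          then show ?thesis using x' Cons a1 b2 by (simp only: wd_12 p12)
        qed
      next
        case a2: False
        then have a2: "a = 2" using a by simp
        define E where "E u = (if u \<noteq> [] \<and> hd u = 1 then \<eta> (tl u) else 0)" for u
        have "(\<lambda>u. \<psi> (2 # u)) = (\<lambda>u. - g (1 # 1 # u) + E u)" by (rule ext) (simp add: p2 E_def)
        then have s1: "wd \<psi> (2 # b # v') = wd (\<lambda>u. g (1 # 1 # u)) (b # v') - wd E (b # v')"
          by (simp only: wd_2 wd_add wd_neg) simp
        have "1 # 1 # b # v' \<in> W (Suc n) l" using x x' Cons a2 by (auto simp: W_def)
        then have "wd g (1 # 1 # b # v') = 0" using coc by blast
        moreover have "wd g (1 # 1 # b # v') = - g (2 # b # v') - wd (\<lambda>u. g (1 # u)) (1 # b # v')" by (rule wd_11)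
        moreover have "wd (\<lambda>u. g (1 # u)) (1 # b # v') = (if b = 1 then - g (1 # 2 # v') else 0)
             - wd (\<lambda>u. g (1 # 1 # u)) (b # v')" by (simp only: wd_1 list.case)
        ultimately have s2: "wd (\<lambda>u. g (1 # 1 # u)) (b # v') = g (2 # b # v') - (if b = 1 then g (1 # 2 # v') else 0)"
          by (simp add: algebra_simps split: if_splits)
        have s3: "wd E (b # v') = (if b = 1 then - g (1 # 2 # v') else 0)"
        proof (cases "b = 1")
          case True
          have "wd E (1 # v') = (case v' of [] \<Rightarrow> 0 | c # w \<Rightarrow> if c = 1 then - E (2 # w) else 0) - wd (\<lambda>u. E (1 # u)) v'"
            by (rule wd_1)
          also have "(\<lambda>u. E (1 # u)) = \<eta>" by (rule ext) (simp add: E_def)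
          finally have "wd E (1 # v') = - wd \<eta> v'" by (simp add: E_def split: list.splits)
          moreover have "v' \<in> W (n - 2) (l - 3)" "2 \<le> n" using x x' Cons a2 True by (auto simp: W_def)
          ultimately show ?thesis using True eta by simp
        next
          case False
          then have "b = 2" using b by simp
          moreover have "(\<lambda>u. E (2 # u)) = (\<lambda>u. 0)" by (rule ext) (simp add: E_def)
          ultimately show ?thesis by (simp only: wd_2 wd_zero) simp
        qed
        show ?thesis using s1 s2 s3 x' Cons a2 by simp
      qed
    qed
  qed
  then show ?case by blast
qed

lemma W2: "crit n l \<Longrightarrow> \<exists>g::nat list \<Rightarrow> 'k::field. (\<forall>w\<in>W (Suc n) l. wd g w = 0) \<and> g (cw n) = 1"
proof (induction n arbitrary: l rule: cw.induct)
  case 1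
  show ?case by (intro exI[of _ "\<lambda>w. if w = [] then 1 else 0"]) (auto simp: W_def length_Suc_conv)
next
  case 2
  show ?case
    apply (intro exI[of _ "\<lambda>w. if w = [1] then 1 else 0"])
    apply (auto simp: W_def length_Suc_conv)
    done
next
  case (3 n)
  then have "crit n (l - 3)" by (simp add: crit_step)
  from 3(1)[OF this] obtain \<chi> :: "nat list \<Rightarrow> 'k" where chi: "\<forall>w\<in>W (Suc n) (l - 3). wd \<chi> w = 0" "\<chi> (cw n) = 1" by blast
  define g where "g x = (if length x \<ge> 2 \<and> ((hd x = 1 \<and> hd (tl x) = 2) \<or> (hd x = 2 \<and> hd (tl x) = 1)) then \<chi> (tl (tl x)) else 0)" for x
  have g12: "g (1 # 2 # v) = \<chi> v" and g21: "g (2 # 1 # v) = \<chi> v" and g11: "g (1 # 1 # v) = 0"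
    and g22: "g (2 # 2 # v) = 0" and g2: "g [2] = 0" for v by (simp_all add: g_def)
  have "wd g x = 0" if x: "x \<in> W (Suc (Suc (Suc n))) l" for x
  proof -
    obtain a b v where xv: "x = a # b # v" using x by (auto simp: W_def length_Suc_conv)
    have ab: "a \<in> {1,2}" "b \<in> {1,2}" using x xv by (auto simp: W_def)
    have vW: "v \<in> W (Suc n) (l - int a - int b)" using x xv by (auto simp: W_def)
    consider "a = 1" "b = 1" | "a = 1" "b = 2" | "a = 2" "b = 1" | "a = 2" "b = 2" using ab by auto
    then show ?thesis
    proof cases
      case 1
      have "wd (\<lambda>u. g (1 # u)) (1 # v) = (case v of [] \<Rightarrow> 0 | b # v'' \<Rightarrow> if b = 1 then - g (1 # 2 # v'') else 0)
          - wd (\<lambda>u. g (1 # 1 # u)) v" by (rule wd_1)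
      also have "(\<lambda>u. g (1 # 1 # u)) = (\<lambda>u. 0)" by (rule ext) (rule g11)
      finally have "wd (\<lambda>u. g (1 # u)) (1 # v) = (case v of [] \<Rightarrow> 0 | b # v'' \<Rightarrow> if b = 1 then - \<chi> v'' else 0)"
        using g12[where v="_"] by (simp add: wd_zero g_def split: list.splits)
      then show ?thesis using 1 xv by (simp only: wd_11) (simp add: g_def split: list.splits)
    next
      case 2
      have "v \<in> W (Suc n) (l - 3)" using vW 2 by simp
      then show ?thesis using 2 xv chi by (simp only: wd_12 g12)
    next
      case 3
      have "(\<lambda>u. g (2 # u)) = (\<lambda>u. if u \<noteq> [] \<and> hd u = 1 then \<chi> (tl u) else 0)"
        apply (rule ext) subgoal for u by (cases u) (auto simp: g_def) done
      moreover have "wd (\<lambda>u. if u \<noteq> [] \<and> hd u = 1 then \<chi> (tl u) else 0) (1 # v) = - wd \<chi> v"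
      proof -
        have "wd (\<lambda>u. if u \<noteq> [] \<and> hd u = 1 then \<chi> (tl u) else 0) (1 # v) =
          (case v of [] \<Rightarrow> 0 | c # w \<Rightarrow> if c = 1 then - 0 else 0) - wd (\<lambda>u. \<chi> u) v"
          by (simp only: wd_1) (simp split: list.splits)
        then show ?thesis by (simp split: list.splits)
      qed
      moreover have "v \<in> W (Suc n) (l - 3)" using vW 3 by simp
      ultimately show ?thesis using 3 xv chi by (simp only: wd_2) simp
    next
      case 4
      have "(\<lambda>u. g (2 # 2 # u)) = (\<lambda>u. 0)" by (rule ext) (rule g22)
      then show ?thesis using 4 xv by (simp only: wd_2 wd_zero) simp
    qed
  qed
  moreover have "g (cw (Suc (Suc n))) = 1" using chi by (simp add: g_def)
  ultimately show ?case by blast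
qed



definition Gw :: "nat \<Rightarrow> int \<Rightarrow> (nat list \<Rightarrow> 'k::field) \<Rightarrow> bas list \<Rightarrow> 'k" where
  "Gw n m g cs = (if set cs \<subseteq> Bp \<and> chain IdO cs IdL \<and> map wl cs \<in> W n (1 - 2 * m) then g (map wl cs) else 0)"

definition Psi :: "nat \<Rightarrow> int \<Rightarrow> (nat list \<Rightarrow> 'k::field) \<Rightarrow> 'k B list \<Rightarrow> 'k" where
  "Psi n m g = (\<lambda>as. if length as = n \<and> set as \<subseteq> Bplus then ev (Gw n m g) as else 0)"

lemma Gw_supp:
  assumes "Gw n m g cs \<noteq> 0"
  shows "set cs \<subseteq> Bp \<and> chain IdO cs IdL \<and> length cs = n \<and> sum_list (map degb cs) = - m"
proof -
  have h: "set cs \<subseteq> Bp" "chain IdO cs IdL" "map wl cs \<in> W n (1 - 2 * m)"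
    using assms by (auto simp: Gw_def split: if_splits)
  have "int (sum_list (map wl cs)) = 2 * sum_list (map degb cs) + pp IdL - pp IdO"
    using chain_pot[OF h(2) h(1)] .
  moreover have "int (sum_list (map wl cs)) = 1 - 2 * m" "length cs = n" using h(3) by (auto simp: W_def)
  ultimately show ?thesis using h by (simp add: pp_def)
qed

lemma Gw_tup: "u \<in> W n (1 - 2 * m) \<Longrightarrow> Gw n m g (tupS IdO u) = g u"
  using W_good[of u n m] by (simp add: Gw_def)

lemma set_update_sub: "set as \<subseteq> A \<Longrightarrow> x \<in> A \<Longrightarrow> set (as[i := x]) \<subseteq> A"
  by (meson set_update_subset_insert insert_subset order_trans subset_insertI2)

lemma Bplus_add: "x \<in> Bplus \<Longrightarrow> y \<in> Bplus \<Longrightarrow> (\<lambda>c. x c + y c) \<in> Bplus" by (simp add: Bplus_iff)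
lemma Bplus_scale: "x \<in> Bplus \<Longrightarrow> (\<lambda>c. s * x c) \<in> Bplus" by (simp add: Bplus_iff)

lemma Psi_cochain: "Psi n m (g :: nat list \<Rightarrow> 'k::field) \<in> cochains n m"
proof -
  let ?G = "Gw n m g"
  have P: "Psi n m g as = ev ?G as" if "length as = n" "set as \<subseteq> Bplus" for as
    using that by (simp add: Psi_def)
  show ?thesis
  unfolding cochains_def
  proof (intro CollectI conjI allI impI)
    fix as :: "'k B list" assume "\<not> (length as = n \<and> set as \<subseteq> Bplus)"
    then show "Psi n m g as = 0" unfolding Psi_def by auto
  next
    fix as :: "'k B list" and i and x y :: "'k B"
    assume h: "length as = n \<and> set as \<subseteq> Bplus \<and> i < n \<and> x \<in> Bplus \<and> y \<in> Bplus"
    then show "Psi n m g (as[i := \<lambda>c. x c + y c]) = Psi n m g (as[i := x]) + Psi n m g (as[i := y])"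
      by (simp add: P set_update_sub Bplus_add ev_upd_add)
  next
    fix as :: "'k B list" and i s and x :: "'k B"
    assume h: "length as = n \<and> set as \<subseteq> Bplus \<and> i < n \<and> x \<in> Bplus"
    have e: "as[i := \<lambda>c. s * x c] = (as[i := x])[i := \<lambda>c. s * ((as[i := x]) ! i) c]"
      using h by simp
    have w: "ev ?G ((as[i := x])[i := \<lambda>c. (\<lambda>_. s) c * ((as[i := x]) ! i) c]) =
       ev (\<lambda>cs. (\<lambda>_. s) (cs!i) * ?G cs) (as[i:=x])"
      by (rule ev_upd_weight) (use h in simp)
    have "Psi n m g (as[i := \<lambda>c. s * x c]) = ev ?G (as[i := \<lambda>c. s * x c])"
      using h by (simp add: P set_update_sub Bplus_scale)
    also have "\<dots> = s * ev ?G (as[i := x])" using w h by (simp add: ev_scale)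
    also have "\<dots> = s * Psi n m g (as[i := x])" using h by (simp add: P set_update_sub)
    finally show "Psi n m g (as[i := \<lambda>c. s * x c]) = s * Psi n m g (as[i := x])" .
  next
    fix as :: "'k B list" and i and r :: "'k B"
    assume h: "length as = n \<and> set as \<subseteq> Bplus \<and> Suc i < n \<and> r \<in> Rset"
    have bi: "as!i \<in> Bplus" "as!Suc i \<in> Bplus" using h by (auto dest: nth_mem)
    have "Psi n m g (as[i := bmult (as ! i) r]) = ev ?G (as[i := bmult (as ! i) r])"
      using h bi by (simp add: P set_update_sub bmult_Bplus)
    also have "\<dots> = ev ?G (as[i := \<lambda>c. r (rgt c) * (as!i) c])"
      using h bi by (simp add: bmult_right_R)
    also have "\<dots> = ev (\<lambda>cs. r (rgt (cs!i)) * ?G cs) as" using h by (simp add: ev_upd_weight)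
    also have "\<dots> = ev (\<lambda>cs. r (lft (cs!Suc i)) * ?G cs) as"
    proof (rule ev_cong)
      fix cs :: "bas list" assume "length cs = length as"
      then show "r (rgt (cs!i)) * ?G cs = r (lft (cs!Suc i)) * ?G cs"
        using Gw_supp[of n m g cs] h chain_nth[of IdO cs IdL] by (cases "?G cs = 0") (auto split: if_splits)
    qed
    also have "\<dots> = ev ?G (as[Suc i := \<lambda>c. r (lft c) * (as!Suc i) c])" using h by (simp add: ev_upd_weight)
    also have "\<dots> = ev ?G (as[Suc i := bmult r (as ! Suc i)])"
      using h bi by (simp add: bmult_left_R)
    also have "\<dots> = Psi n m g (as[Suc i := bmult r (as ! Suc i)])"
      using h bi by (simp add: P set_update_sub bmult_left_R Bplus_iff)
    finally show "Psi n m g (as[i := bmult (as ! i) r]) = Psi n m g (as[Suc i := bmult r (as ! Suc i)])" .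
  next
    fix as :: "'k B list" and r :: "'k B"
    assume h: "length as = n \<and> set as \<subseteq> Bplus \<and> 0 < n \<and> r \<in> Rset"
    have bi: "as!0 \<in> Bplus" "as!(n-1) \<in> Bplus" using h by (auto dest: nth_mem)
    have "Psi n m g (as[0 := bmult r (as ! 0)]) = ev ?G (as[0 := bmult r (as ! 0)])"
      using h bi by (simp add: P set_update_sub bmult_left_R Bplus_iff)
    also have "\<dots> = ev ?G (as[0 := \<lambda>c. r (lft c) * (as!0) c])"
      using h bi by (simp add: bmult_left_R)
    also have "\<dots> = ev (\<lambda>cs. r (lft (cs!0)) * ?G cs) as" using h by (simp add: ev_upd_weight)
    also have "\<dots> = ev (\<lambda>cs. r IdO * ?G cs) as"
    proof (rule ev_cong)
      fix cs :: "bas list" assume "length cs = length as"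
      then show "r (lft (cs!0)) * ?G cs = r IdO * ?G cs"
        using Gw_supp[of n m g cs] h chain_nth[of IdO cs IdL] by (cases "?G cs = 0") (auto split: if_splits)
    qed
    also have "\<dots> = lact r (Psi n m g as)" using h by (simp add: ev_scale lact_formula P)
    finally show "Psi n m g (as[0 := bmult r (as ! 0)]) = lact r (Psi n m g as)" .
    have "Psi n m g (as[n - 1 := bmult (as ! (n - 1)) r]) = ev ?G (as[n - 1 := bmult (as ! (n - 1)) r])"
      using h bi by (simp add: P set_update_sub bmult_Bplus)
    also have "\<dots> = ev ?G (as[n - 1 := \<lambda>c. r (rgt c) * (as!(n-1)) c])"
      using h bi by (simp add: bmult_right_R)
    also have "\<dots> = ev (\<lambda>cs. r (rgt (cs!(n-1))) * ?G cs) as" using h by (simp add: ev_upd_weight)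
    also have "\<dots> = ev (\<lambda>cs. r IdL * ?G cs) as"
    proof (rule ev_cong)
      fix cs :: "bas list" assume "length cs = length as"
      then show "r (rgt (cs!(n-1))) * ?G cs = r IdL * ?G cs"
        using Gw_supp[of n m g cs] h chain_nth[of IdO cs IdL] by (cases "?G cs = 0") (auto split: if_splits)
    qed
    also have "\<dots> = ract (Psi n m g as) r" using h by (simp add: ev_scale ract_formula P mult.commute)
    finally show "Psi n m g (as[n - 1 := bmult (as ! (n - 1)) r]) = ract (Psi n m g as) r" .
  next
    assume "n = 0"
    have "Gw n m g [] = 0" using Gw_supp[of n m g "[]"] by auto
    then have "Psi n m g [] = 0" using \<open>n = 0\<close> by (simp add: Psi_def)
    then show "\<forall>r\<in>Rset. lact r (Psi n m g []) = ract (Psi n m g []) r"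
      by (simp add: lact_formula ract_formula)
  next
    fix as :: "'k B list" and ds
    assume h: "length as = n \<and> set as \<subseteq> Bplus \<and> list_all2 homog ds as"
    show "Psi n m g as \<in> Mdeg (sum_list ds + m)"
    proof (cases "sum_list ds + m = 0")
      case True then show ?thesis by (simp add: Mdeg_def)
    next
      case False
      have "ev ?G as = 0"
      proof (rule ev_zero)
        fix cs :: "bas list"
        assume c: "length cs = length as" "set cs \<subseteq> Bp" "\<forall>i<length as. (as ! i) (cs ! i) \<noteq> 0"
        show "?G cs = 0"
        proof (rule ccontr)
          assume "?G cs \<noteq> 0"
          then have s: "sum_list (map degb cs) = - m" using Gw_supp by blast
          have "ds = map degb cs"
          proof (rule nth_equalityI)
            show "length ds = length (map degb cs)" using h c list_all2_lengthD[of homog ds as] by simp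
            fix i assume "i < length ds"
            then have "homog (ds!i) (as!i)" "i < length as" using h by (auto simp: list_all2_conv_all_nth)
            then show "ds ! i = map degb cs ! i" using c by (auto simp: homog_def)
          qed
          then show False using s False by simp
        qed
      qed
      then show ?thesis using h by (simp add: P Mdeg_def)
    qed
  qed
qed



lemma C_off: "\<phi> \<in> cochains n m \<Longrightarrow> \<not> (length as = n \<and> set as \<subseteq> Bplus) \<Longrightarrow> \<phi> as = 0"
  by (simp add: cochains_def)
lemma C_add: "\<phi> \<in> cochains n m \<Longrightarrow> length as = n \<Longrightarrow> set as \<subseteq> Bplus \<Longrightarrow> i < n \<Longrightarrow> x \<in> Bplus \<Longrightarrow> y \<in> Bplus \<Longrightarrow>
   \<phi> (as[i := (\<lambda>c. x c + y c)]) = \<phi> (as[i := x]) + \<phi> (as[i := y])"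
  unfolding cochains_def by blast
lemma C_scale: "\<phi> \<in> cochains n m \<Longrightarrow> length as = n \<Longrightarrow> set as \<subseteq> Bplus \<Longrightarrow> i < n \<Longrightarrow> x \<in> Bplus \<Longrightarrow>
   \<phi> (as[i := (\<lambda>c. s * x c)]) = s * \<phi> (as[i := x])"
  unfolding cochains_def by blast
lemma C_bal: "\<phi> \<in> cochains n m \<Longrightarrow> length as = n \<Longrightarrow> set as \<subseteq> Bplus \<Longrightarrow> Suc i < n \<Longrightarrow> r \<in> Rset \<Longrightarrow>
   \<phi> (as[i := bmult (as ! i) r]) = \<phi> (as[Suc i := bmult r (as ! Suc i)])"
  unfolding cochains_def by blast
lemma C_lr: "\<phi> \<in> cochains n m \<Longrightarrow> length as = n \<Longrightarrow> set as \<subseteq> Bplus \<Longrightarrow> 0 < n \<Longrightarrow> r \<in> Rset \<Longrightarrow>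
   \<phi> (as[0 := bmult r (as ! 0)]) = lact r (\<phi> as) \<and> \<phi> (as[n - 1 := bmult (as ! (n - 1)) r]) = ract (\<phi> as) r"
  unfolding cochains_def by blast
lemma C_zero: "\<phi> \<in> cochains 0 m \<Longrightarrow> r \<in> Rset \<Longrightarrow> lact r (\<phi> []) = ract (\<phi> []) r"
  unfolding cochains_def by blast
lemma C_deg: "\<phi> \<in> cochains n m \<Longrightarrow> length as = n \<Longrightarrow> set as \<subseteq> Bplus \<Longrightarrow> list_all2 homog ds as \<Longrightarrow>
        \<phi> as \<in> Mdeg (sum_list ds + m)"
  unfolding cochains_def by blast

lemma C_slot0:
  assumes "\<phi> \<in> cochains n m" "length as = n" "set as \<subseteq> Bplus" "i < n"
  shows "\<phi> (as[i := (\<lambda>_. 0)]) = 0"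
proof -
  have "\<phi> (as[i := (\<lambda>c. 0 * (\<lambda>_. 0) c)]) = 0 * \<phi> (as[i := (\<lambda>_. 0)])"
    by (rule C_scale[OF assms]) (simp add: Bplus_iff)
  then show ?thesis by simp
qed

lemma C_sum:
  assumes "\<phi> \<in> cochains n m" "length as = n" "set as \<subseteq> Bplus" "i < n" "finite C" "\<forall>c\<in>C. F c \<in> Bplus"
  shows "\<phi> (as[i := (\<lambda>x. \<Sum>c\<in>C. F c x)]) = (\<Sum>c\<in>C. \<phi> (as[i := F c]))"
  using assms(5,6)
proof (induction C rule: finite_induct)
  case empty then show ?case using C_slot0[OF assms(1-4)] by simp
next
  case (insert a C)
  have s: "(\<lambda>x. \<Sum>c\<in>C. F c x) \<in> Bplus" using insert by (simp add: Bplus_iff)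
  have "\<phi> (as[i := (\<lambda>x. \<Sum>c\<in>insert a C. F c x)]) = \<phi> (as[i := (\<lambda>x. F a x + (\<Sum>c\<in>C. F c x))])"
    using insert by simp
  also have "\<dots> = \<phi> (as[i := F a]) + \<phi> (as[i := (\<lambda>x. \<Sum>c\<in>C. F c x)])"
    by (rule C_add[OF assms(1-4)]) (use insert s in auto)
  finally show ?case using insert by simp
qed

lemma Bplus_decomp: "x \<in> Bplus \<Longrightarrow> x = (\<lambda>y. \<Sum>c\<in>Bp. x c * ee c y)"
  apply (rule ext) subgoal for y by (cases y) (auto simp: Bplus_iff Bp_def ee_apply) done

lemma C_slot_expand:
  assumes "\<phi> \<in> cochains n m" "length as = n" "set as \<subseteq> Bplus" "i < n"
  shows "\<phi> as = (\<Sum>c\<in>Bp. (as!i) c * \<phi> (as[i := ee c]))"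
proof -
  have ai: "as!i \<in> Bplus" using assms by (auto dest: nth_mem)
  have "\<phi> as = \<phi> (as[i := (\<lambda>y. \<Sum>c\<in>Bp. (as!i) c * ee c y)])"
    using Bplus_decomp[OF ai] by (metis list_update_id)
  also have "\<dots> = (\<Sum>c\<in>Bp. \<phi> (as[i := (\<lambda>y. (as!i) c * ee c y)]))"
    by (rule C_sum[OF assms]) (auto simp: Bplus_iff ee_apply Bp_def)
  also have "\<dots> = (\<Sum>c\<in>Bp. (as!i) c * \<phi> (as[i := ee c]))"
    by (rule sum.cong[OF refl], rule C_scale[OF assms]) (rule ee_Bplus)
  finally show ?thesis .
qed

lemma ee_set: "set cs \<subseteq> Bp \<Longrightarrow> set (map ee cs) \<subseteq> Bplus"
  using ee_Bplus by auto

lemma cochain_expand_k: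
  assumes "\<phi> \<in> cochains n m" "length as = n" "set as \<subseteq> Bplus" "k \<le> n"
  shows "\<phi> as = ev (\<lambda>cs. \<phi> (map ee cs @ drop k as)) (take k as)"
  using assms(4)
proof (induction k)
  case 0 then show ?case by simp
next
  case (Suc k)
  have kn: "k < n" using Suc by simp
  have tk: "take (Suc k) as = take k as @ [as!k]" using kn assms(2) by (simp add: take_Suc_conv_app_nth)
  have "\<phi> as = ev (\<lambda>cs. \<phi> (map ee cs @ drop k as)) (take k as)" using Suc by simp
  also have "\<dots> = ev (\<lambda>cs. \<Sum>c\<in>Bp. (as!k) c * \<phi> (map ee (cs @ [c]) @ drop (Suc k) as)) (take k as)"
  proof (rule ev_cong)
    fix cs :: "bas list" assume cs: "length cs = length (take k as)" "set cs \<subseteq> Bp"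
    let ?bs = "map ee cs @ drop k as"
    have lcs: "length cs = k" using cs kn assms(2) by simp
    have bs: "length ?bs = n" "set ?bs \<subseteq> Bplus" using lcs assms(2,3) kn ee_set[OF cs(2)]
      by (auto dest: in_set_dropD)
    have dk: "drop k as = as!k # drop (Suc k) as" using kn assms(2) by (simp add: Cons_nth_drop_Suc)
    have "?bs ! k = as!k" using lcs dk by (simp add: nth_append)
    moreover have "?bs[k := ee c] = map ee (cs @ [c]) @ drop (Suc k) as" for c
      using lcs dk by (simp add: list_update_append)
    ultimately show "\<phi> ?bs = (\<Sum>c\<in>Bp. (as!k) c * \<phi> (map ee (cs @ [c]) @ drop (Suc k) as))"
      using C_slot_expand[OF assms(1) bs kn] by simp
  qed
  also have "\<dots> = ev (\<lambda>cs. \<phi> (map ee cs @ drop (Suc k) as)) (take (Suc k) as)"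
    unfolding tk ev_snoc by simp
  finally show ?case .
qed

lemma cochain_expand:
  assumes "\<phi> \<in> cochains n m" "length as = n" "set as \<subseteq> Bplus"
  shows "\<phi> as = ev (\<lambda>cs. \<phi> (map ee cs)) as"
  using cochain_expand_k[OF assms order_refl] assms(2) by simp



lemma lr_Bp: "c \<in> Bp \<Longrightarrow> lft c \<in> {IdO, IdL} \<and> rgt c \<in> {IdO, IdL}"
  by (auto simp: Bp_def)
lemma bmul_rgt: "c \<in> Bp \<Longrightarrow> bmul c (rgt c) = Some c" by (auto simp: Bp_def)
lemma bmul_lft: "c \<in> Bp \<Longrightarrow> bmul (lft c) c = Some c" by (auto simp: Bp_def)
lemma bmul_none_l: "c \<in> Bp \<Longrightarrow> i \<in> {IdO, IdL} \<Longrightarrow> i \<noteq> lft c \<Longrightarrow> bmul i c = None"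
  by (auto simp: Bp_def)
lemma bmul_none_r: "c \<in> Bp \<Longrightarrow> i \<in> {IdO, IdL} \<Longrightarrow> i \<noteq> rgt c \<Longrightarrow> bmul c i = None"
  by (auto simp: Bp_def)
lemma ee_Rset: "i \<in> {IdO, IdL} \<Longrightarrow> ee i \<in> Rset" by (auto simp: Rset_iff ee_apply)

lemma cochain_basis_supp:
  assumes phi: "\<phi> \<in> cochains n m" and cs: "length cs = n" "set cs \<subseteq> Bp" and nz: "\<phi> (map ee cs) \<noteq> 0"
  shows "chain IdO cs IdL \<and> sum_list (map degb cs) = - m"
proof -
  let ?as = "map ee cs"
  have as: "length ?as = n" "set ?as \<subseteq> Bplus" using cs ee_set by auto
  have ch: "chain IdO cs IdL"
  proof (cases "n = 0")
    case True
    then have "cs = []" using cs by simp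
    have "lact (ee IdO) (\<phi> []) = ract (\<phi> []) (ee IdO)" using C_zero[of \<phi> m "ee IdO"] phi True ee_Rset by auto
    then have "\<phi> [] = 0" by (simp add: lact_formula ract_formula ee_apply)
    then show ?thesis using nz \<open>cs = []\<close> by simp
  next
    case False
    have nth: "\<And>i. i < n \<Longrightarrow> cs!i \<in> Bp" using cs by auto
    have l0: "lft (cs!0) = IdO"
    proof (rule ccontr)
      assume a: "lft (cs!0) \<noteq> IdO"
      then have "lft (cs!0) = IdL" using lr_Bp[OF nth[of 0]] False by auto
      have e: "?as ! 0 = ee (cs!0)" using False cs by simp
      have b: "bmult (ee IdL) (ee (cs!0)) = ee (cs!0)"
        using bmul_lft[OF nth[of 0]] False \<open>lft (cs!0) = IdL\<close> by (simp add: bmult_ee)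
      have eq: "?as[0 := bmult (ee IdL) (?as!0)] = ?as" unfolding e b by (metis e list_update_id)
      have "\<phi> (?as[0 := bmult (ee IdL) (?as!0)]) = lact (ee IdL) (\<phi> ?as)"
        using C_lr[OF phi as _ ee_Rset[of IdL]] False by blast
      then have "\<phi> ?as = lact (ee IdL) (\<phi> ?as)" unfolding eq .
      then show False using nz by (simp add: lact_formula ee_apply)
    qed
    have ln: "rgt (cs!(n-1)) = IdL"
    proof (rule ccontr)
      assume a: "rgt (cs!(n-1)) \<noteq> IdL"
      then have r: "rgt (cs!(n-1)) = IdO" using lr_Bp[OF nth[of "n-1"]] False by auto
      have e: "?as ! (n-1) = ee (cs!(n-1))" using False cs by simp
      have b: "bmult (ee (cs!(n-1))) (ee IdO) = ee (cs!(n-1))"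
        using bmul_rgt[OF nth[of "n-1"]] False r by (simp add: bmult_ee)
      have eq: "?as[n-1 := bmult (?as!(n-1)) (ee IdO)] = ?as" unfolding e b by (metis e list_update_id)
      have "\<phi> (?as[n-1 := bmult (?as!(n-1)) (ee IdO)]) = ract (\<phi> ?as) (ee IdO)"
        using C_lr[OF phi as _ ee_Rset[of IdO]] False by blast
      then have "\<phi> ?as = ract (\<phi> ?as) (ee IdO)" unfolding eq .
      then show False using nz by (simp add: ract_formula ee_apply)
    qed
    have mid: "rgt (cs!i) = lft (cs!Suc i)" if i: "Suc i < n" for i
    proof (rule ccontr)
      assume a: "rgt (cs!i) \<noteq> lft (cs!Suc i)"
      let ?r = "ee (rgt (cs!i))"
      have ri: "rgt (cs!i) \<in> {IdO, IdL}" using lr_Bp[OF nth[of i]] i by auto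
      have e1: "?as ! i = ee (cs!i)" "?as ! Suc i = ee (cs!Suc i)" using i cs by simp_all
      have b1: "bmult (ee (cs!i)) ?r = ee (cs!i)" using i bmul_rgt[OF nth[of i]] by (simp add: bmult_ee)
      have b2: "bmult ?r (ee (cs!Suc i)) = (\<lambda>_. 0)"
        using i bmul_none_l[OF nth[of "Suc i"] ri a] by (simp add: bmult_ee)
      have q1: "?as[i := bmult (?as!i) ?r] = ?as" unfolding e1 b1 by (metis e1(1) list_update_id)
      have q2: "?as[Suc i := bmult ?r (?as!Suc i)] = ?as[Suc i := (\<lambda>_. 0)]" unfolding e1 b2 ..
      have "\<phi> (?as[i := bmult (?as!i) ?r]) = \<phi> (?as[Suc i := bmult ?r (?as!Suc i)])"
        using C_bal[OF phi as i ee_Rset[OF ri]] by blast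
      then have "\<phi> ?as = \<phi> (?as[Suc i := (\<lambda>_. 0)])" unfolding q1 q2 .
      also have "\<dots> = 0" using C_slot0[OF phi as i] .
      finally show False using nz by simp
    qed
    show ?thesis unfolding chain_nth using False cs l0 ln mid by auto
  qed
  have "list_all2 homog (map degb cs) ?as"
    using cs by (auto simp: list_all2_conv_all_nth homog_def ee_apply split: if_splits)
  then have "\<phi> ?as \<in> Mdeg (sum_list (map degb cs) + m)" using C_deg[OF phi as] by blast
  then have "sum_list (map degb cs) + m = 0" using nz by (auto simp: Mdeg_def split: if_splits)
  then show ?thesis using ch by simp
qed

lemma cochain_Psi:
  assumes phi: "\<phi> \<in> cochains n m"
  shows "\<phi> = Psi n m (\<lambda>u. \<phi> (map ee (tupS IdO u)))"
proof
  fix as :: "'a B list"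
  show "\<phi> as = Psi n m (\<lambda>u. \<phi> (map ee (tupS IdO u))) as"
  proof (cases "length as = n \<and> set as \<subseteq> Bplus")
    case False then show ?thesis using C_off[OF phi False] unfolding Psi_def by auto
  next
    case True
    have "\<phi> as = ev (\<lambda>cs. \<phi> (map ee cs)) as" using cochain_expand[OF phi] True by blast
    also have "\<dots> = ev (Gw n m (\<lambda>u. \<phi> (map ee (tupS IdO u)))) as"
    proof (rule ev_cong)
      fix cs :: "bas list" assume cs: "length cs = length as" "set cs \<subseteq> Bp"
      show "\<phi> (map ee cs) = Gw n m (\<lambda>u. \<phi> (map ee (tupS IdO u))) cs"
      proof (cases "\<phi> (map ee cs) = 0")
        case False
        then have "chain IdO cs IdL \<and> sum_list (map degb cs) = - m"
          using cochain_basis_supp[OF phi _ cs(2)] cs True by auto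
        then show ?thesis using good_W[of cs m] cs True chain_tup[of cs IdO IdL] by (simp add: Gw_def)
      next
        case z: True
        then show ?thesis using chain_tup[of cs IdO IdL] by (simp add: Gw_def)
      qed
    qed
    finally show ?thesis using True by (simp add: Psi_def)
  qed
qed

lemma Psi_eval:
  assumes "u \<in> W n (1 - 2 * m)"
  shows "Psi n m g (map ee (tupS IdO u)) = g u"
proof -
  have w: "set (tupS IdO u) \<subseteq> Bp" "length (tupS IdO u) = n" using W_good[OF assms] by auto
  have "Psi n m g (map ee (tupS IdO u)) = ev (Gw n m g) (map ee (tupS IdO u))"
    unfolding Psi_def using w ee_set[OF w(1)] by auto
  also have "\<dots> = g u" by (simp add: ev_basis[OF w(1)] Gw_tup[OF assms])
  finally show ?thesis .
qed

lemma Psi_cong: "(\<And>u. u \<in> W n (1 - 2 * m) \<Longrightarrow> g u = g' u) \<Longrightarrow> Psi n m g = Psi n m g'"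
  unfolding Psi_def Gw_def by (intro ext) (simp cong: if_cong)

lemma Psi_zero: "(\<And>u. u \<in> W n (1 - 2 * m) \<Longrightarrow> g u = 0) \<Longrightarrow> Psi n m g = (\<lambda>_. 0)"
  unfolding Psi_def Gw_def by (intro ext) (simp add: ev_zero_fun cong: if_cong)



fun Dr :: "(bas list \<Rightarrow> 'k::field) \<Rightarrow> bas list \<Rightarrow> 'k" where
  "Dr G [] = 0"
| "Dr G [c] = 0"
| "Dr G (c # d # cs) = (case bmul c d of Some x \<Rightarrow> - G (x # cs) | None \<Rightarrow> 0) - Dr (\<lambda>v. G (c # v)) (d # cs)"

lemma Dl_Cons: "Dl (Suc i) G (c # cs) = Dl i (\<lambda>v. G (c # v)) cs"
  by (simp add: Dl_def split: option.splits)

lemma DrSum: "length cs = Suc n \<Longrightarrow> (\<Sum>i\<in>{1..n}. (-1) ^ i * Dl (i - 1) G cs) = Dr G cs"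
proof (induction n arbitrary: cs G)
  case 0
  then obtain c where "cs = [c]" by (auto simp: length_Suc_conv)
  then show ?case by simp
next
  case (Suc n)
  then obtain c d cs' where cs: "cs = c # d # cs'" by (auto simp: length_Suc_conv)
  have "(\<Sum>i\<in>{1..Suc n}. (-1) ^ i * Dl (i - 1) G cs) =
        (-1) * Dl 0 G cs + (\<Sum>i\<in>{Suc 1..Suc n}. (-1) ^ i * Dl (i - 1) G cs)"
    by (subst sum.atLeast_Suc_atMost) auto
  also have "(\<Sum>i\<in>{Suc 1..Suc n}. (-1) ^ i * Dl (i - 1) G cs) = (\<Sum>i\<in>{1..n}. (-1) ^ Suc i * Dl i G cs)"
    by (subst sum.shift_bounds_cl_Suc_ivl) simp
  also have "\<dots> = - (\<Sum>i\<in>{1..n}. (-1) ^ i * Dl (i - 1) (\<lambda>v. G (c # v)) (d # cs'))"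
    unfolding sum_negf[symmetric]
  proof (rule sum.cong[OF refl])
    fix i assume "i \<in> {1..n}"
    then obtain j where "i = Suc j" by (cases i) auto
    then show "(-1) ^ Suc i * Dl i G cs = - ((-1) ^ i * Dl (i - 1) (\<lambda>v. G (c # v)) (d # cs'))"
      using cs by (simp add: Dl_Cons)
  qed
  also have "(\<Sum>i\<in>{1..n}. (-1) ^ i * Dl (i - 1) (\<lambda>v. G (c # v)) (d # cs')) = Dr (\<lambda>v. G (c # v)) (d # cs')"
    using Suc.prems cs by (intro Suc.IH) simp
  finally show ?case using cs by (simp add: Dl_def split: option.splits)
qed

lemma Dr_tup:
  "s \<in> {IdO, IdL} \<Longrightarrow> set w \<subseteq> {1, 2} \<Longrightarrow> (\<forall>u. set u \<subseteq> {1, 2} \<longrightarrow> G (tupS s u) = h u) \<Longrightarrow>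
   Dr G (tupS s w) = wd h w"
proof (induction h w arbitrary: s G rule: wd.induct)
  case (1 h) then show ?case by simp
next
  case (2 h a) then show ?case by simp
next
  case (3 h a b v)
  define c where "c = letr s a"
  define d where "d = letr (rgt c) b"
  have ab: "a \<in> {1,2}" "b \<in> {1,2}" using 3 by auto
  have tm: "bmul c d = (if a = 1 \<and> b = 1 then Some (letr s 2) else None)"
     "a = 1 \<and> b = 1 \<longrightarrow> rgt (letr s 2) = rgt d"
    using tup_merge[OF "3.prems"(1) ab] by (simp_all add: c_def d_def)
  have t: "tupS s (a # b # v) = c # d # tupS (rgt d) v" by (simp add: c_def d_def)
  have IH: "Dr (\<lambda>u. G (c # u)) (tupS (rgt c) (b # v)) = wd (\<lambda>u. h (a # u)) (b # v)"
  proof (rule "3.IH")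
    show "rgt c \<in> {IdO, IdL}" using rgt_letr[of s a] by (simp add: c_def)
    show "set (b # v) \<subseteq> {1, 2}" using "3.prems" by auto
    show "\<forall>u. set u \<subseteq> {1, 2} \<longrightarrow> G (c # tupS (rgt c) u) = h (a # u)"
    proof (intro allI impI)
      fix u :: "nat list" assume "set u \<subseteq> {1, 2}"
      then have "set (a # u) \<subseteq> {1, 2}" using ab by auto
      then have "G (tupS s (a # u)) = h (a # u)" using "3.prems"(3) by blast
      then show "G (c # tupS (rgt c) u) = h (a # u)" by (simp add: c_def)
    qed
  qed
  have first: "(case bmul c d of Some x \<Rightarrow> - G (x # tupS (rgt d) v) | None \<Rightarrow> 0) =
        (if a = 1 \<and> b = 1 then - h (2 # v) else 0)"
  proof (cases "a = 1 \<and> b = 1")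
    case True
    then have "G (letr s 2 # tupS (rgt d) v) = h (2 # v)"
      using "3.prems" tm(2) by (metis insert_subset insertI2 singletonI list.set(2) tupS.simps(2))
    then show ?thesis using True tm(1) by simp
  qed (use tm in auto)
  have t2: "tupS (rgt c) (b # v) = d # tupS (rgt d) v" by (simp add: d_def)
  show ?case unfolding t Dr.simps using IH first unfolding t2 by simp
qed

lemma Dr_zero: "Dr (\<lambda>_. 0) cs = 0"
proof (induction cs)
  case (Cons c cs) then show ?case by (cases cs) (auto split: option.splits)
qed simp

lemma Dr_supp: "(\<forall>cs'. G cs' \<noteq> 0 \<longrightarrow> chain s cs' t) \<Longrightarrow> Dr G cs \<noteq> 0 \<Longrightarrow> chain s cs t"
proof (induction G cs arbitrary: s rule: Dr.induct)
  case (1 G) then show ?case by simp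
next
  case (2 G c) then show ?case by simp
next
  case (3 G c d cs)
  show ?case
  proof (cases "(case bmul c d of Some x \<Rightarrow> - G (x # cs) | None \<Rightarrow> 0) = 0")
    case False
    then obtain x where "bmul c d = Some x" "G (x # cs) \<noteq> 0" by (auto split: option.splits)
    then show ?thesis using "3.prems"(1) chain_merge by blast
  next
    case True
    then have nz: "Dr (\<lambda>v. G (c # v)) (d # cs) \<noteq> 0" using "3.prems"(2) by simp
    have "\<exists>cs'. G (c # cs') \<noteq> 0"
    proof (rule ccontr)
      assume "\<not> ?thesis"
      then have "(\<lambda>v. G (c # v)) = (\<lambda>_. 0)" by auto
      then show False using nz Dr_zero by metis
    qed
    then obtain cs' where "G (c # cs') \<noteq> 0" by blast
    then have lc: "lft c = s" using "3.prems"(1) by fastforce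
    have "chain (rgt c) (d # cs) t"
      by (rule "3.IH"[OF _ nz]) (use "3.prems"(1) in auto)
    then show ?thesis using lc by simp
  qed
qed

lemma Dr_Gw:
  assumes cs: "length cs = Suc n" "set cs \<subseteq> Bp"
  shows "Dr (Gw n m g) cs = Gw (Suc n) m (wd g) cs"
proof (cases "chain IdO cs IdL")
  case False
  have "Dr (Gw n m g) cs = 0"
  proof (rule ccontr)
    assume "Dr (Gw n m g) cs \<noteq> 0"
    then have "chain IdO cs IdL" by (rule Dr_supp[rotated]) (use Gw_supp in blast)
    then show False using False by simp
  qed
  then show ?thesis using False by (simp add: Gw_def)
next
  case True
  define u where "u = map wl cs"
  have cu: "cs = tupS IdO u" using chain_tup[OF cs(2) True] by (simp add: u_def)
  have us: "set u \<subseteq> {1, 2}" "length u = Suc n" using cs by (auto simp: u_def wl_def)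
  define gr where "gr v = (if v \<in> W n (1 - 2 * m) then g v else 0)" for v
  have "Dr (Gw n m g) (tupS IdO u) = wd (\<lambda>v. Gw n m g (tupS IdO v)) u"
    by (rule Dr_tup) (use us in auto)
  also have "\<dots> = wd gr u"
  proof (rule wd_cong[OF us(1)])
    fix v :: "nat list" assume v: "set v \<subseteq> {1, 2}"
    show "Gw n m g (tupS IdO v) = gr v"
    proof (cases "v \<in> W n (1 - 2 * m)")
      case True then show ?thesis by (simp add: Gw_tup gr_def)
    next
      case False
      have "map wl (tupS IdO v) = v" using tup_props[of IdO v] v by auto
      then show ?thesis using False by (simp add: Gw_def gr_def)
    qed
  qed
  also have "\<dots> = Gw (Suc n) m (wd g) cs"
  proof (cases "u \<in> W (Suc n) (1 - 2 * m)")
    case True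
    have "wd gr u = wd g u"
      by (rule wd_cong[OF us(1)]) (use True in \<open>auto simp: gr_def W_def\<close>)
    then show ?thesis using True cs True \<open>chain IdO cs IdL\<close> by (simp add: Gw_def u_def)
  next
    case False
    have "wd gr u = wd (\<lambda>_. 0) u"
      by (rule wd_cong[OF us(1)]) (use False us in \<open>auto simp: gr_def W_def\<close>)
    then show ?thesis using False by (simp add: Gw_def u_def wd_zero)
  qed
  finally show ?thesis using cu by simp
qed

lemma hdiff_Psi: "hdiff n (Psi n m g) = Psi (Suc n) m (wd g)"
proof
  fix as :: "'a B list"
  show "hdiff n (Psi n m g) as = Psi (Suc n) m (wd g) as"
  proof (cases "length as = Suc n \<and> set as \<subseteq> Bplus")
    case False then show ?thesis unfolding hdiff_def Psi_def by auto
  next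
    case True
    let ?G = "Gw n m g"
    have nth: "\<And>i. i < Suc n \<Longrightarrow> as!i \<in> Bplus" using True by (auto dest: nth_mem)
    have l0: "lact (as ! 0) x = 0" for x using nth[of 0] by (simp add: lact_formula Bplus_iff)
    have r0: "ract x (as ! n) = 0" for x using nth[of n] by (simp add: ract_formula Bplus_iff)
    have mi: "Psi n m g (take (i - 1) as @ [bmult (as ! (i - 1)) (as ! i)] @ drop (Suc i) as) = ev (Dl (i - 1) ?G) as"
      if i: "i \<in> {1..n}" for i
    proof -
      let ?L = "take (i - 1) as @ [bmult (as ! (i - 1)) (as ! i)] @ drop (Suc i) as"
      have L: "length ?L = n" "set ?L \<subseteq> Bplus" using True i bmult_Bplus[OF nth[of "i - 1"]]
        by (auto dest: in_set_takeD in_set_dropD)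
      have e: "Suc (i - 1) = i" using i by simp
      have "ev ?G (take (i - 1) as @ [bmult (as ! (i - 1)) (as ! Suc (i - 1))] @ drop (Suc (Suc (i - 1))) as)
            = ev (Dl (i - 1) ?G) as"
        by (rule ev_merge) (use True i nth in auto)
      then show ?thesis using L e by (simp add: Psi_def)
    qed
    have "hdiff n (Psi n m g) as = (\<Sum>i\<in>{1..n}. (-1) ^ i * ev (Dl (i - 1) ?G) as)"
      unfolding hdiff_def using True l0 r0 mi by simp
    also have "\<dots> = ev (\<lambda>cs. \<Sum>i\<in>{1..n}. (-1) ^ i * Dl (i - 1) ?G cs) as"
      by (simp add: ev_sum ev_scale)
    also have "\<dots> = ev (Dr ?G) as" by (rule ev_cong) (use True DrSum in auto)
    also have "\<dots> = ev (Gw (Suc n) m (wd g)) as" by (rule ev_cong) (use True Dr_Gw in auto)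
    finally show ?thesis using True by (simp add: Psi_def)
  qed
qed



lemma W0_empty: "W 0 (1 - 2 * m) = {}"
  by (auto simp: W_def) presburger

lemma cocycle_iff:
  assumes phi: "\<phi> \<in> cochains n m"
  shows "hdiff n \<phi> = (\<lambda>_. 0) \<longleftrightarrow> (\<forall>u\<in>W (Suc n) (1 - 2 * m). wd (\<lambda>u. \<phi> (map ee (tupS IdO u))) u = 0)"
proof -
  let ?g = "\<lambda>u. \<phi> (map ee (tupS IdO u))"
  have h: "hdiff n \<phi> = Psi (Suc n) m (wd ?g)"
    using cochain_Psi[OF phi] hdiff_Psi by metis
  show ?thesis
  proof
    assume z: "hdiff n \<phi> = (\<lambda>_. 0)"
    show "\<forall>u\<in>W (Suc n) (1 - 2 * m). wd ?g u = 0"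
    proof
      fix u assume u: "u \<in> W (Suc n) (1 - 2 * m)"
      have "wd ?g u = Psi (Suc n) m (wd ?g) (map ee (tupS IdO u))" using Psi_eval[OF u, of "wd ?g"] by simp
      moreover have "Psi (Suc n) m (wd ?g) = (\<lambda>_. 0)" using h z by simp
      ultimately show "wd ?g u = 0" by simp
    qed
  next
    assume "\<forall>u\<in>W (Suc n) (1 - 2 * m). wd ?g u = 0"
    then show "hdiff n \<phi> = (\<lambda>_. 0)" using h Psi_zero by metis
  qed
qed

lemma coboundaries_char:
  "0 < n \<Longrightarrow> (coboundaries n m :: ('k::field B list \<Rightarrow> 'k) set) = range (\<lambda>\<psi>::nat list \<Rightarrow> 'k. Psi n m (wd \<psi>))"
proof -
  assume n: "0 < n"
  have "hdiff (n - 1) ` (cochains (n - 1) m :: ('k B list \<Rightarrow> 'k) set) = range (\<lambda>\<psi>::nat list \<Rightarrow> 'k. Psi n m (wd \<psi>))"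
  proof
    show "hdiff (n - 1) ` (cochains (n - 1) m :: ('k B list \<Rightarrow> 'k) set) \<subseteq> range (\<lambda>\<psi>::nat list \<Rightarrow> 'k. Psi n m (wd \<psi>))"
    proof
      fix x :: "'k B list \<Rightarrow> 'k" assume "x \<in> hdiff (n - 1) ` (cochains (n - 1) m :: ('k B list \<Rightarrow> 'k) set)"
      then obtain \<phi> :: "'k B list \<Rightarrow> 'k" where phi: "\<phi> \<in> cochains (n - 1) m" "x = hdiff (n - 1) \<phi>" by blast
      have "x = Psi (Suc (n - 1)) m (wd (\<lambda>u. \<phi> (map ee (tupS IdO u))))"
        using phi cochain_Psi[OF phi(1)] hdiff_Psi by metis
      then show "x \<in> range (\<lambda>\<psi>::nat list \<Rightarrow> 'k. Psi n m (wd \<psi>))" using n by simp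
    qed
  next
    show "range (\<lambda>\<psi>::nat list \<Rightarrow> 'k. Psi n m (wd \<psi>)) \<subseteq> hdiff (n - 1) ` (cochains (n - 1) m :: ('k B list \<Rightarrow> 'k) set)"
    proof
      fix x :: "'k B list \<Rightarrow> 'k" assume "x \<in> range (\<lambda>\<psi>::nat list \<Rightarrow> 'k. Psi n m (wd \<psi>))"
      then obtain \<psi> :: "nat list \<Rightarrow> 'k" where x: "x = Psi n m (wd \<psi>)" by blast
      have "x = hdiff (n - 1) (Psi (n - 1) m \<psi>)" using x n hdiff_Psi[of "n - 1" m \<psi>] by simp
      then show "x \<in> hdiff (n - 1) ` cochains (n - 1) m" using Psi_cochain by blast
    qed
  qed
  then show ?thesis using n by (simp add: coboundaries_def)
qed

lemma cob_sub_coc: "(coboundaries n m :: ('k::field B list \<Rightarrow> 'k) set) \<subseteq> cocycles n m"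
proof (cases "n = 0")
  case True
  have z: "Psi 0 m (\<lambda>_. 0 :: 'k) = (\<lambda>_. 0)" by (rule Psi_zero) simp
  have "(\<lambda>_. 0 :: 'k) \<in> cochains 0 m" using Psi_cochain[of 0 m "\<lambda>_. 0 :: 'k"] z by simp
  moreover have "hdiff 0 (\<lambda>_::'k B list. 0 :: 'k) = (\<lambda>_. 0)"
    using hdiff_Psi[of 0 m "\<lambda>_. 0 :: 'k"] z Psi_zero[of "Suc 0" m "wd (\<lambda>_. 0 :: 'k)"] wd_zero by metis
  ultimately show ?thesis using True by (simp add: coboundaries_def cocycles_def)
next
  case False
  show ?thesis
  proof
    fix x :: "'k B list \<Rightarrow> 'k" assume "x \<in> (coboundaries n m :: ('k B list \<Rightarrow> 'k) set)"
    then obtain \<psi> :: "nat list \<Rightarrow> 'k" where x: "x = Psi n m (wd \<psi>)" using coboundaries_char False by blast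
    have "hdiff n x = (\<lambda>_. 0)" unfolding x hdiff_Psi by (rule Psi_zero) (simp add: wd_wd)
    then show "x \<in> cocycles n m" using x Psi_cochain by (simp add: cocycles_def)
  qed
qed

lemma coc_to_cob:
  assumes x: "(x :: 'k::field B list \<Rightarrow> 'k) \<in> cocycles n m"
    and c: "crit n (1 - 2 * m) \<Longrightarrow> x (map ee (tupS IdO (cw n))) = 0"
  shows "x \<in> coboundaries n m"
proof -
  let ?g = "\<lambda>u. x (map ee (tupS IdO u))"
  have phi: "x \<in> cochains n m" and z: "hdiff n x = (\<lambda>_. 0)" using x by (auto simp: cocycles_def)
  have "\<forall>w\<in>W (Suc n) (1 - 2 * m). wd ?g w = 0" using cocycle_iff[OF phi] z by blast
  moreover have "crit n (1 - 2 * m) \<Longrightarrow> ?g (cw n) = 0" using c by simp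
  ultimately obtain \<psi> :: "nat list \<Rightarrow> 'k" where psi: "\<forall>w\<in>W n (1 - 2 * m). wd \<psi> w = ?g w"
    using W1[of n "1 - 2 * m" ?g] by blast
  have "Psi n m ?g = Psi n m (wd \<psi>)" by (rule Psi_cong) (use psi in simp)
  then have xe: "x = Psi n m (wd \<psi>)" using cochain_Psi[OF phi] by simp
  show ?thesis
  proof (cases "n = 0")
    case True
    have "Psi 0 m (wd \<psi>) = (\<lambda>_. 0)" by (rule Psi_zero) (use W0_empty in simp)
    then have "x = (\<lambda>_. 0)" using xe True by simp
    then show ?thesis using True by (simp add: coboundaries_def)
  next
    case False
    then show ?thesis using xe coboundaries_char[of n m] by auto
  qed
qed

lemma HH_main:
  fixes m :: int
  shows "(crit n (1 - 2 * m) \<longrightarrow> HH_iso_k TYPE('k::field) n m) \<and> (\<not> crit n (1 - 2 * m) \<longrightarrow> HH_zero TYPE('k) n m)"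
proof (intro conjI impI)
  assume nc: "\<not> crit n (1 - 2 * m)"
  show "HH_zero TYPE('k) n m"
    unfolding HH_zero_def using cob_sub_coc coc_to_cob nc by blast
next
  assume cr: "crit n (1 - 2 * m)"
  have n0: "n \<noteq> 0"
  proof
    assume "n = 0"
    then have "2 * (1 - 2 * m) = 0" using cr by (simp add: crit_def)
    then show False by presburger
  qed
  have cwW: "cw n \<in> W n (1 - 2 * m)" by (rule cw_W[OF cr])
  define f :: "('k B list \<Rightarrow> 'k) \<Rightarrow> 'k" where "f x = x (map ee (tupS IdO (cw n)))" for x
  have surj: "f ` cocycles n m = UNIV"
  proof (intro set_eqI iffI)
    fix s :: 'k assume "s \<in> UNIV"
    obtain g :: "nat list \<Rightarrow> 'k" where g: "\<forall>w\<in>W (Suc n) (1 - 2 * m). wd g w = 0" "g (cw n) = 1"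
      using W2[OF cr] by blast
    let ?x = "Psi n m (\<lambda>u. s * g u)"
    have "hdiff n ?x = (\<lambda>_. 0)" unfolding hdiff_Psi by (rule Psi_zero) (use g in \<open>simp add: wd_scale\<close>)
    then have "?x \<in> cocycles n m" using Psi_cochain by (simp add: cocycles_def)
    moreover have "f ?x = s" using Psi_eval[OF cwW, of "\<lambda>u. s * g u"] g by (simp add: f_def)
    ultimately show "s \<in> f ` cocycles n m" by force
  qed simp
  have ker: "{x \<in> cocycles n m. f x = 0} = coboundaries n m"
  proof
    show "{x \<in> cocycles n m. f x = 0} \<subseteq> coboundaries n m"
      using coc_to_cob unfolding f_def by blast
  next
    show "coboundaries n m \<subseteq> {x \<in> cocycles n m. f x = 0}"
    proof
      fix x :: "'k B list \<Rightarrow> 'k" assume x: "x \<in> (coboundaries n m :: ('k B list \<Rightarrow> 'k) set)"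
      then obtain \<psi> :: "nat list \<Rightarrow> 'k" where xe: "x = Psi n m (wd \<psi>)" using coboundaries_char n0 by blast
      have "f x = 0" using Psi_eval[OF cwW, of "wd \<psi>"] W3[of \<psi> n] by (simp add: f_def xe)
      then show "x \<in> {x \<in> cocycles n m. f x = 0}" using x cob_sub_coc by blast
    qed
  qed
  show "HH_iso_k TYPE('k) n m"
    unfolding HH_iso_k_def
    by (intro exI[of _ f] conjI ballI allI surj ker) (simp_all add: f_def)
qed



lemma crit_gen: "crit n (1 - 2 * (int j - int n)) \<longleftrightarrow> (n + 2 = 4 * j \<or> n + 3 = 4 * j)"
proof -
  have "crit n (1 - 2 * (int j - int n)) \<longleftrightarrow> (n mod 2 = 0 \<and> 2 * (1 - 2 * (int j - int n)) = 3 * int n) \<or>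
     (n mod 2 = 1 \<and> 2 * (1 - 2 * (int j - int n)) = 3 * int n - 1)"
    unfolding crit_def by presburger
  also have "\<dots> \<longleftrightarrow> (n + 2 = 4 * j \<or> n + 3 = 4 * j)" by presburger
  finally show ?thesis .
qed

lemma crit_j1: "crit n (1 - 2 * (1 - int n)) \<longleftrightarrow> n \<in> {1, 2}" using crit_gen[of n 1] by auto
lemma crit_j2: "crit n (1 - 2 * (2 - int n)) \<longleftrightarrow> n \<in> {5, 6}" using crit_gen[of n 2] by auto
lemma crit_j3: "crit n (1 - 2 * (3 - int n)) \<longleftrightarrow> n \<in> {9, 10}" using crit_gen[of n 3] by auto
lemma crit_j4: "crit n (1 - 2 * (4 - int n)) \<longleftrightarrow> n \<in> {13, 14}" using crit_gen[of n 4] by auto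

theorem mainTheorem8:
  assumes "(2::'k::field) \<noteq> 0" and "(3::'k) \<noteq> 0"
  shows "(\<forall>n. if n \<in> {1, 2} then HH_iso_k TYPE('k) n (1 - int n) else HH_zero TYPE('k) n (1 - int n))
       \<and> (\<forall>n. if n \<in> {5, 6} then HH_iso_k TYPE('k) n (2 - int n) else HH_zero TYPE('k) n (2 - int n))
       \<and> (\<forall>n. if n \<in> {9, 10} then HH_iso_k TYPE('k) n (3 - int n) else HH_zero TYPE('k) n (3 - int n))
       \<and> (\<forall>n. if n \<in> {13, 14} then HH_iso_k TYPE('k) n (4 - int n) else HH_zero TYPE('k) n (4 - int n))"
proof (intro conjI allI)
  fix n :: nat
  show "if n \<in> {1, 2} then HH_iso_k TYPE('k) n (1 - int n) else HH_zero TYPE('k) n (1 - int n)"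
    using HH_main[of n "1 - int n", where 'k='k] crit_j1[of n] by auto
  show "if n \<in> {5, 6} then HH_iso_k TYPE('k) n (2 - int n) else HH_zero TYPE('k) n (2 - int n)"
    using HH_main[of n "2 - int n", where 'k='k] crit_j2[of n] by auto
  show "if n \<in> {9, 10} then HH_iso_k TYPE('k) n (3 - int n) else HH_zero TYPE('k) n (3 - int n)"
    using HH_main[of n "3 - int n", where 'k='k] crit_j3[of n] by auto
  show "if n \<in> {13, 14} then HH_iso_k TYPE('k) n (4 - int n) else HH_zero TYPE('k) n (4 - int n)"
    using HH_main[of n "4 - int n", where 'k='k] crit_j4[of n] by auto
qed


end
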